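(* Let $\phi$ be one of the two numbers $\frac{-1\pm\sqrt5}{2}$. In $\mathbb{C}\mathbb{P}^2$ with homogeneous coordinates $[x:y:z]$ consider the lines $L_1: z=0$, $L_2: x=0$, $L_3: x-z=0$, $L_4: y=0$, $L_5: y-z=0$, $L_6: x-y=0$, $L_7: x+\phi y-z=0$, $L_8: \phi x-\phi y+z=0$, $L_9: -\phi x+(\phi-1)y=0$, $L_{10}: x-\phi z=0$, and $L^1_{11}: (\phi+2)x-(\phi+1)y+\phi z=0$, $L^1_{12}: (\phi-1)x-\phi y+(2\phi-1)z=0$, $L^1_{13}: (-2\phi+1)x+(-3\phi+2)y+(\phi-1)z=0$, $L^2_{11}: (\phi+2)x-(\phi+3)y+(\phi+2)z=0$, $L^2_{12}: -(\phi+1)x+(\phi-2)y+z=0$, $L^2_{13}: -x+(-\phi+2)y-(\phi+1)z=0$. Let $\mathcal{B}_1=\{L_1,\dots,L_{10},L^1_{11},L^1_{12},L^1_{13}\}$ and $\mathcal{B}_2=\{L_1,\dots,L_{10},L^2_{11},L^2_{12},L^2_{13}\}$. Then $\mathcal{B}_1$ and $\mathcal{B}_2$ form a (real) nonarithmetic pair defined over $\mathbb{Q}(\sqrt5)$.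
   Context: A line arrangement is a finite set of distinct lines in $\mathbb{C}\mathbb{P}^2$. Its combinatorics is the pair $(\mathcal{A},\mathrm{sing}(\mathcal{A}))$ where each singular point is identified with the set of lines of $\mathcal{A}$ through it. Two arrangements are lattice isomorphic if some bijection between their lines induces a bijection between their sets of singular points. The moduli space $\mathcal{M}(\mathcal{C})$ of a combinatorics $\mathcal{C}$ is the set of arrangements with combinatorics $\mathcal{C}$ modulo $\mathrm{PGL}_3(\mathbb{C})$. A pair of arrangements means two lattice isomorphic arrangements lying in different connected components of their common moduli space. The definition field $\mathbb{F}(\mathcal{A})$ is the number field generated by the coefficients of the lines of $\mathcal{A}$. A field automorphism $\sigma$ acts on a line $ax+by+cz=0$ by $\sigma(a)x+\sigma(b)y+\sigma(c)z=0$, and on an arrangement line by line. A pair $\mathcal{A}_1,\mathcal{A}_2$ is arithmetic if, for a number field $\mathbb{F}$ containing both definition fields, some $\sigma\in\mathrm{Gal}(\mathbb{F}/\mathbb{Q})$ satisfies $\sigma\cdot\mathcal{A}_1=\mathcal{A}_2$; it is nonarithmetic otherwise. *)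

theory Defs
  imports "HOL-Analysis.Analysis"
begin

text \<open>Lines of CP2 and points of CP2 are both represented by nonzero vectors in complex^3,
  up to nonzero scalar multiples.  The line with coefficient vector l = (a,b,c) is ax+by+cz=0.\<close>

definition incident :: "complex^3 \<Rightarrow> complex^3 \<Rightarrow> bool" where
  "incident p l \<longleftrightarrow> (\<Sum>k\<in>UNIV. p$k * l$k) = 0"

definition pclass :: "complex^3 \<Rightarrow> (complex^3) set" where
  "pclass v = {w. \<exists>c. c \<noteq> 0 \<and> w = c *s v}"

definition is_arrangement :: "(complex^3)^'n \<Rightarrow> bool" where
  "is_arrangement L \<longleftrightarrow> (\<forall>i. L$i \<noteq> 0) \<and> (\<forall>i j. i \<noteq> j \<longrightarrow> pclass (L$i) \<noteq> pclass (L$j))"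

definition lines_of :: "(complex^3)^'n \<Rightarrow> (complex^3) set set" where
  "lines_of L = {pclass (L$i) | i. True}"

text \<open>Combinatorics: each singular point (point on at least two lines) identified with the
  set of (labels of) lines through it.\<close>
definition comb :: "(complex^3)^'n::finite \<Rightarrow> 'n set set" where
  "comb L = {{i. incident p (L$i)} | p. p \<noteq> 0 \<and> card {i. incident p (L$i)} \<ge> 2}"

definition lattice_iso :: "(complex^3)^'n::finite \<Rightarrow> (complex^3)^'n \<Rightarrow> ('n \<Rightarrow> 'n) \<Rightarrow> bool" where
  "lattice_iso L1 L2 f \<longleftrightarrow> bij f \<and> (image f) ` comb L1 = comb L2"

text \<open>Realization space (ordered, all representatives) of a combinatorics C; the moduli space is
  its quotient by PGL3 and by rescaling of representatives (connected groups).\<close>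
definition realization_space :: "'n::finite set set \<Rightarrow> ((complex^3)^'n) set" where
  "realization_space C = {L. is_arrangement L \<and> comb L = C}"

definition relabel :: "(complex^3)^'n \<Rightarrow> ('n \<Rightarrow> 'n) \<Rightarrow> (complex^3)^'n" where
  "relabel L f = (\<chi> i. L$(f i))"

definition is_pair :: "(complex^3)^'n::finite \<Rightarrow> (complex^3)^'n \<Rightarrow> bool" where
  "is_pair L1 L2 \<longleftrightarrow> is_arrangement L1 \<and> is_arrangement L2 \<and> (\<exists>f. lattice_iso L1 L2 f) \<and>
     (\<forall>f. lattice_iso L1 L2 f \<longrightarrow>
        relabel L2 f \<notin> connected_component_set (realization_space (comb L1)) L1)"

definition is_subfield :: "complex set \<Rightarrow> bool" where
  "is_subfield F \<longleftrightarrow> 0 \<in> F \<and> 1 \<in> F \<and> (\<forall>x\<in>F. \<forall>y\<in>F. x + y \<in> F \<and> x * y \<in> F) \<and>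
     (\<forall>x\<in>F. - x \<in> F) \<and> (\<forall>x\<in>F. x \<noteq> 0 \<longrightarrow> inverse x \<in> F)"

definition number_field :: "complex set \<Rightarrow> bool" where
  "number_field F \<longleftrightarrow> is_subfield F \<and>
     (\<exists>bs :: complex list. F \<subseteq> {sum_list (map2 (\<lambda>q b. of_rat q * b) qs bs) | qs. length qs = length bs})"

text \<open>Definition field: the field generated by the coefficients of the lines (coefficients taken
  up to scaling, i.e. ratios of coefficients of each line).\<close>
definition def_field :: "(complex^3)^'n \<Rightarrow> complex set" where
  "def_field L = \<Inter>{F. is_subfield F \<and> (\<forall>i j k. L$i$j \<noteq> 0 \<longrightarrow> L$i$k / L$i$j \<in> F)}"

definition field_aut :: "complex set \<Rightarrow> (complex \<Rightarrow> complex) \<Rightarrow> bool" where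
  "field_aut F \<sigma> \<longleftrightarrow> bij_betw \<sigma> F F \<and> (\<forall>x\<in>F. \<forall>y\<in>F. \<sigma> (x + y) = \<sigma> x + \<sigma> y \<and> \<sigma> (x * y) = \<sigma> x * \<sigma> y)"

definition act :: "(complex \<Rightarrow> complex) \<Rightarrow> (complex^3)^'n \<Rightarrow> (complex^3)^'n" where
  "act \<sigma> L = (\<chi> i. \<chi> k. \<sigma> (L$i$k))"

definition arithmetic_pair :: "(complex^3)^'n::finite \<Rightarrow> (complex^3)^'n \<Rightarrow> bool" where
  "arithmetic_pair L1 L2 \<longleftrightarrow> (\<exists>F \<sigma> M. number_field F \<and> def_field L1 \<subseteq> F \<and> def_field L2 \<subseteq> F \<and>
     field_aut F \<sigma> \<and> (\<forall>i. pclass (M$i) = pclass (L1$i) \<and> (\<forall>k. M$i$k \<in> F)) \<and>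
     lines_of (act \<sigma> M) = lines_of L2)"

definition Q_sqrt5 :: "complex set" where
  "Q_sqrt5 = {of_rat a + of_rat b * complex_of_real (sqrt 5) | a b. True}"

definition B1 :: "complex \<Rightarrow> (complex^3)^13" where
  "B1 \<phi> = vector [vector [0,0,1], vector [1,0,0], vector [1,0,-1], vector [0,1,0],
     vector [0,1,-1], vector [1,-1,0], vector [1,\<phi>,-1], vector [\<phi>,-\<phi>,1],
     vector [-\<phi>,\<phi>-1,0], vector [1,0,-\<phi>],
     vector [\<phi>+2, -(\<phi>+1), \<phi>], vector [\<phi>-1, -\<phi>, 2*\<phi>-1],
     vector [-2*\<phi>+1, -3*\<phi>+2, \<phi>-1]]"

definition B2 :: "complex \<Rightarrow> (complex^3)^13" where
  "B2 \<phi> = vector [vector [0,0,1], vector [1,0,0], vector [1,0,-1], vector [0,1,0],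
     vector [0,1,-1], vector [1,-1,0], vector [1,\<phi>,-1], vector [\<phi>,-\<phi>,1],
     vector [-\<phi>,\<phi>-1,0], vector [1,0,-\<phi>],
     vector [\<phi>+2, -(\<phi>+3), \<phi>+2], vector [-(\<phi>+1), \<phi>-2, 1],
     vector [-1, -\<phi>+2, -(\<phi>+1)]]"

end

theory Submission
  imports Defs "HOL-Computational_Algebra.Primes"
begin


definition det3 :: "complex^3 \<Rightarrow> complex^3 \<Rightarrow> complex^3 \<Rightarrow> complex" where
  "det3 a b c = a$1*(b$2*c$3 - b$3*c$2) - a$2*(b$1*c$3 - b$3*c$1) + a$3*(b$1*c$2 - b$2*c$1)"

definition cr :: "complex^3 \<Rightarrow> complex^3 \<Rightarrow> complex^3" where
  "cr a b = vector [a$2*b$3 - a$3*b$2, a$3*b$1 - a$1*b$3, a$1*b$2 - a$2*b$1]"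

definition dt :: "complex^3 \<Rightarrow> complex^3 \<Rightarrow> complex" where
  "dt p l = p$1*l$1 + p$2*l$2 + p$3*l$3"

lemma incident_dt: "incident p l \<longleftrightarrow> dt p l = 0"
  by (simp add: incident_def dt_def sum_3)

lemma dt_cr: "dt (cr a b) c = det3 a b c"
  by (simp add: dt_def cr_def det3_def algebra_simps)

lemma dt_cr_a: "dt (cr a b) a = 0" and dt_cr_b: "dt (cr a b) b = 0"
  by (simp_all add: dt_def cr_def algebra_simps)

lemma vec3_eqI: "x$1 = y$1 \<Longrightarrow> x$2 = y$2 \<Longrightarrow> x$3 = y$3 \<Longrightarrow> x = (y::'a^3)"
  by (simp add: vec_eq_iff forall_3)

lemma vec3_zero_iff: "(x::complex^3) = 0 \<longleftrightarrow> x$1 = 0 \<and> x$2 = 0 \<and> x$3 = 0"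
  by (simp add: vec_eq_iff forall_3)

lemma pclass_smult:
  assumes c: "c \<noteq> 0" shows "pclass (c *s a) = pclass a"
proof (rule set_eqI)
  fix w
  show "w \<in> pclass (c *s a) \<longleftrightarrow> w \<in> pclass a"
  proof
    assume "w \<in> pclass (c *s a)"
    then obtain d where d: "d \<noteq> 0" "w = d *s (c *s a)" unfolding pclass_def by blast
    have "w = (d*c) *s a" using d(2) by (simp add: vector_smult_assoc)
    moreover have "d*c \<noteq> 0" using d(1) c by simp
    ultimately show "w \<in> pclass a" unfolding pclass_def by blast
  next
    assume "w \<in> pclass a"
    then obtain d where d: "d \<noteq> 0" "w = d *s a" unfolding pclass_def by blast
    have "w = (d/c) *s (c *s a)" using d(2) c by (simp add: vector_smult_assoc)
    moreover have "d/c \<noteq> 0" using d(1) c by simp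
    ultimately show "w \<in> pclass (c *s a)" unfolding pclass_def by blast
  qed
qed

lemma ratio_eq: "(x::complex) \<noteq> 0 \<Longrightarrow> x*y = z*w \<Longrightarrow> y = w/x * z"
  by (simp add: field_simps)

lemma cr_zero_par:
  assumes h: "cr a b = 0" and ak: "a$k \<noteq> 0"
  shows "b = (b$k/a$k) *s a"
proof -
  have e1: "a$2*b$3 = a$3*b$2" and e2: "a$3*b$1 = a$1*b$3" and e3: "a$1*b$2 = a$2*b$1"
    using h by (simp_all add: cr_def vec3_zero_iff)
  have "k = 1 \<or> k = 2 \<or> k = 3" using exhaust_3 by auto
  moreover
  { assume k: "k = 1"
    have "b = (b$1/a$1) *s a"
      apply (rule vec3_eqI)
      using ak k ratio_eq[OF _ e3] ratio_eq[of "a$1" "b$3" "a$3" "b$1"] e2 by auto }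
  moreover
  { assume k: "k = 2"
    have "b = (b$2/a$2) *s a"
      apply (rule vec3_eqI)
      using ak k ratio_eq[of "a$2" "b$1" "a$1" "b$2"] e3 ratio_eq[OF _ e1] by auto }
  moreover
  { assume k: "k = 3"
    have "b = (b$3/a$3) *s a"
      apply (rule vec3_eqI)
      using ak k ratio_eq[OF _ e2] ratio_eq[of "a$3" "b$2" "a$2" "b$3"] e1 by auto }
  ultimately show ?thesis by blast
qed

lemma cr_nonzero:
  assumes a: "a \<noteq> 0" and b: "b \<noteq> 0" and p: "pclass a \<noteq> pclass b"
  shows "cr a b \<noteq> 0"
proof
  assume h: "cr a b = 0"
  obtain k where ak: "a$k \<noteq> 0" using a by (auto simp: vec_eq_iff)
  define c where "c = b$k / a$k"
  have bc: "b = c *s a" unfolding c_def by (rule cr_zero_par[OF h ak])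
  have "c \<noteq> 0" using b bc by auto
  hence "pclass b = pclass a" using bc pclass_smult by simp
  thus False using p by simp
qed

lemma key_identity:
  "det3 a b m * p$r = dt p a * (cr b m)$r + dt p b * (cr m a)$r + dt p m * (cr a b)$r"
proof -
  have "r = 1 \<or> r = 2 \<or> r = 3" using exhaust_3 by auto
  thus ?thesis by (auto simp: det3_def dt_def cr_def algebra_simps)
qed

lemma incident_iff_det:
  assumes p: "p \<noteq> 0" and pa: "dt p a = 0" and pb: "dt p b = 0" and c: "cr a b \<noteq> 0"
  shows "dt p m = 0 \<longleftrightarrow> det3 a b m = 0"
proof
  assume "dt p m = 0"
  hence "\<And>r. det3 a b m * p$r = 0" using key_identity[of a b m p] pa pb by simp
  moreover obtain r where "p$r \<noteq> 0" using p by (auto simp: vec_eq_iff)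
  ultimately show "det3 a b m = 0" by auto
next
  assume "det3 a b m = 0"
  hence "\<And>r. dt p m * (cr a b)$r = 0" using key_identity[of a b m p] pa pb by simp
  moreover obtain r where "(cr a b)$r \<noteq> 0" using c by (auto simp: vec_eq_iff)
  ultimately show "dt p m = 0" by auto
qed

definition conc :: "(complex^3)^'n \<Rightarrow> 'n \<Rightarrow> 'n \<Rightarrow> 'n \<Rightarrow> bool" where
  "conc L i j k \<longleftrightarrow> det3 (L$i) (L$j) (L$k) = 0"

definition Sset :: "(complex^3)^'n \<Rightarrow> 'n \<Rightarrow> 'n \<Rightarrow> 'n set" where
  "Sset L i j = {k. conc L i j k}"

lemma arr_cr: "is_arrangement L \<Longrightarrow> i \<noteq> j \<Longrightarrow> cr (L$i) (L$j) \<noteq> 0"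
  unfolding is_arrangement_def using cr_nonzero by blast

lemma comb_mem: "S \<in> comb L \<longleftrightarrow> (\<exists>p. S = {i. incident p (L$i)} \<and> p \<noteq> 0 \<and> 2 \<le> card {i. incident p (L$i)})"
  unfolding comb_def by (rule mem_Collect_eq)

lemma comb_S:
  fixes L :: "(complex^3)^'n::finite"
  assumes L: "is_arrangement L" and S: "S \<in> comb L" and "i \<in> S" "j \<in> S" "i \<noteq> j"
  shows "S = Sset L i j"
proof -
  obtain p where p: "p \<noteq> 0" and Sp: "S = {k. incident p (L$k)}"
    using S unfolding comb_mem by blast
  have pa: "dt p (L$i) = 0" and pb: "dt p (L$j) = 0" using assms Sp incident_dt by auto
  show ?thesis unfolding Sp Sset_def conc_def incident_dt
    using incident_iff_det[OF p pa pb arr_cr[OF L \<open>i\<noteq>j\<close>]] by auto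
qed

lemma S_comb:
  fixes L :: "(complex^3)^'n::finite"
  assumes L: "is_arrangement L" and ij: "i \<noteq> j"
  shows "Sset L i j \<in> comb L"
proof -
  let ?p = "cr (L$i) (L$j)"
  have p: "?p \<noteq> 0" using arr_cr[OF L ij] .
  have eq: "{k. incident ?p (L$k)} = Sset L i j"
    by (simp add: Sset_def conc_def incident_dt dt_cr)
  have "i \<in> Sset L i j" "j \<in> Sset L i j" by (simp_all add: Sset_def conc_def det3_def algebra_simps)
  hence "{i,j} \<subseteq> Sset L i j" by auto
  hence "card {i,j} \<le> card (Sset L i j)" by (intro card_mono) auto
  hence "card (Sset L i j) \<ge> 2" using ij by simp
  hence "Sset L i j = {k. incident ?p (L$k)} \<and> ?p \<noteq> 0 \<and> 2 \<le> card {k. incident ?p (L$k)}"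
    using p eq by simp
  thus ?thesis unfolding comb_mem by blast
qed

lemma comb_char:
  fixes L :: "(complex^3)^'n::finite"
  assumes L: "is_arrangement L"
  shows "comb L = {Sset L i j | i j. i \<noteq> j}"
proof
  show "comb L \<subseteq> {Sset L i j | i j. i \<noteq> j}"
  proof
    fix S assume S: "S \<in> comb L"
    then obtain p where "p \<noteq> 0" "S = {k. incident p (L$k)}" "card {k. incident p (L$k)} \<ge> 2" unfolding comb_mem by blast
    hence "card S \<ge> 2" by simp
    have fS: "finite S" by simp
    have "\<not> card S \<le> Suc 0" using \<open>card S \<ge> 2\<close> by simp
    then obtain i j where "i \<in> S" "j \<in> S" "i \<noteq> j"
      using card_le_Suc0_iff_eq[OF fS] by blast
    thus "S \<in> {Sset L i j | i j. i \<noteq> j}" using comb_S[OF L S] by blast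
  qed
  show "{Sset L i j | i j. i \<noteq> j} \<subseteq> comb L" using S_comb[OF L] by blast
qed

lemma conc_iff:
  fixes L :: "(complex^3)^'n::finite"
  assumes L: "is_arrangement L" and ij: "i \<noteq> j"
  shows "conc L i j k \<longleftrightarrow> (\<exists>S\<in>comb L. i \<in> S \<and> j \<in> S \<and> k \<in> S)"
proof
  assume "conc L i j k"
  moreover have "i \<in> Sset L i j" "j \<in> Sset L i j" by (simp_all add: Sset_def conc_def det3_def algebra_simps)
  moreover have "k \<in> Sset L i j" using \<open>conc L i j k\<close> unfolding Sset_def by simp
  ultimately show "\<exists>S\<in>comb L. i \<in> S \<and> j \<in> S \<and> k \<in> S" using S_comb[OF L ij] by blast
next
  assume "\<exists>S\<in>comb L. i \<in> S \<and> j \<in> S \<and> k \<in> S"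
  then obtain S where "S \<in> comb L" "i \<in> S" "j \<in> S" "k \<in> S" by blast
  hence "S = Sset L i j" using comb_S[OF L _ _ _ ij] by blast
  thus "conc L i j k" using \<open>k \<in> S\<close> unfolding Sset_def by simp
qed

lemma conc_transfer:
  fixes L M :: "(complex^3)^'n::finite"
  assumes "is_arrangement L" "is_arrangement M" "comb L = comb M" "i \<noteq> j"
  shows "conc L i j k \<longleftrightarrow> conc M i j k"
  using conc_iff[OF assms(1) assms(4)] conc_iff[OF assms(2) assms(4)] assms(3) by simp

lemma comb_eq:
  fixes L M :: "(complex^3)^'n::finite"
  assumes L: "is_arrangement L" and M: "is_arrangement M"
    and h: "\<And>i j k. i \<noteq> j \<Longrightarrow> conc L i j k \<longleftrightarrow> conc M i j k"
  shows "comb L = comb M"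
proof -
  have "\<And>i j. i \<noteq> j \<Longrightarrow> Sset L i j = Sset M i j" using h by (auto simp: Sset_def)
  thus ?thesis unfolding comb_char[OF L] comb_char[OF M] by blast
qed


lemma sqrt5_irr: "sqrt (5::real) \<notin> \<rat>"
proof
  have p: "prime (5::nat)" by (simp add: prime_nat_iff' atLeastLessThan_nat_numeral)
  assume "sqrt (5::real) \<in> \<rat>"
  then obtain m n :: nat where n: "n \<noteq> 0" and sq: "\<bar>sqrt 5\<bar> = real m / real n" and cop: "coprime m n"
    by (rule Rats_abs_nat_div_natE)
  have eq: "m\<^sup>2 = 5 * n\<^sup>2"
  proof -
    from n sq have "real m = \<bar>sqrt 5\<bar> * real n" by simp
    then have "real (m\<^sup>2) = (sqrt 5)\<^sup>2 * real (n\<^sup>2)" by (simp add: power_mult_distrib)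
    also have "(sqrt 5)\<^sup>2 = (5::real)" by simp
    finally have "real (m\<^sup>2) = real (5 * n\<^sup>2)" by simp
    thus ?thesis by (simp only: of_nat_eq_iff)
  qed
  have "5 dvd m \<and> 5 dvd n"
  proof
    from eq have "5 dvd m\<^sup>2" by simp
    with p show "5 dvd m" using prime_dvd_power by blast
    then obtain k where "m = 5 * k" ..
    with eq have "5 * n\<^sup>2 = 5\<^sup>2 * k\<^sup>2" by algebra
    hence "n\<^sup>2 = 5 * k\<^sup>2" by (simp add: power2_eq_square)
    hence "5 dvd n\<^sup>2" by simp
    with p show "5 dvd n" using prime_dvd_power by blast
  qed
  hence "5 dvd gcd m n" by simp
  with cop show False by simp
qed

lemma int_golden: fixes a b :: int assumes h: "a*a - a*b - b*b = 0" shows "a = 0 \<and> b = 0"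
proof (cases "b = 0")
  case True thus ?thesis using h by simp
next
  case False
  have e: "(2*a - b)*(2*a-b) = 5*(b*b)" using h by algebra
  hence "real_of_int ((2*a - b)*(2*a-b)) = real_of_int (5*(b*b))" by simp
  hence "(real_of_int (2*a-b))^2 = 5 * (real_of_int b)^2" by (simp add: power2_eq_square)
  hence "sqrt ((real_of_int (2*a-b))^2) = sqrt (5 * (real_of_int b)^2)" by simp
  hence "\<bar>real_of_int (2*a-b)\<bar> = sqrt 5 * \<bar>real_of_int b\<bar>" by (simp add: real_sqrt_mult)
  hence "sqrt 5 = \<bar>real_of_int (2*a-b)\<bar> / \<bar>real_of_int b\<bar>" using False by (simp add: field_simps)
  hence "sqrt (5::real) \<in> \<rat>" by simp
  thus ?thesis using sqrt5_irr by simp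
qed

lemma phi_sq:
  assumes "\<phi> = (-1 + complex_of_real (sqrt 5)) / 2 \<or> \<phi> = (-1 - complex_of_real (sqrt 5)) / 2"
  shows "\<phi>*\<phi> = 1 - \<phi>"
proof -
  have s: "complex_of_real (sqrt 5) * complex_of_real (sqrt 5) = 5"
    by (simp flip: of_real_mult)
  have "(2*\<phi>+1)*(2*\<phi>+1) = 5"
    using assms
  proof
    assume "\<phi> = (-1 + complex_of_real (sqrt 5)) / 2"
    hence "2*\<phi>+1 = complex_of_real (sqrt 5)" by (simp add: algebra_simps)
    thus ?thesis using s by simp
  next
    assume "\<phi> = (-1 - complex_of_real (sqrt 5)) / 2"
    hence "2*\<phi>+1 = - complex_of_real (sqrt 5)" by (simp add: algebra_simps eq_neg_iff_add_eq_0)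
    thus ?thesis using s by simp
  qed
  moreover have "4*(\<phi>*\<phi> + \<phi> - 1) = (2*\<phi>+1)*(2*\<phi>+1) - 5" by (simp add: algebra_simps)
  ultimately have "4*(\<phi>*\<phi> + \<phi> - 1) = 0" by simp
  hence "\<phi>*\<phi> + \<phi> - 1 = 0" by (simp only: mult_eq_0_iff) simp
  thus ?thesis by (simp add: algebra_simps eq_diff_eq)
qed

definition ev :: "complex \<Rightarrow> int \<times> int \<Rightarrow> complex" where
  "ev \<phi> p = of_int (fst p) + of_int (snd p) * \<phi>"

lemma ev0:
  assumes ph: "\<phi>*\<phi> = 1 - \<phi>"
  shows "ev \<phi> (a,b) = 0 \<longleftrightarrow> a = 0 \<and> b = 0"
proof
  assume h: "ev \<phi> (a,b) = 0"
  show "a = 0 \<and> b = 0"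
  proof (cases "b = 0")
    case True thus ?thesis using h by (simp add: ev_def)
  next
    case False
    have fb: "\<phi> * of_int b = - of_int a" using h by (simp add: ev_def add_eq_0_iff mult.commute)
    have "(of_int a::complex) * of_int a = (\<phi> * of_int b) * (\<phi> * of_int b)" using fb by simp
    also have "\<dots> = of_int b * of_int b * (\<phi>*\<phi>)" by (simp add: algebra_simps)
    also have "\<dots> = of_int b * of_int b * (1 - \<phi>)" by (simp only: ph)
    also have "\<dots> = of_int b * of_int b - of_int b * (\<phi> * of_int b)" by (simp add: algebra_simps)
    also have "\<dots> = of_int b * of_int b + of_int b * of_int a" using fb by simp
    finally have "(of_int a) * (of_int a) - of_int a * of_int b - of_int b * of_int b = (0::complex)"
      by (simp add: algebra_simps)
    hence "of_int (a*a - a*b - b*b) = (0::complex)" by simp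
    hence "a*a - a*b - b*b = 0" by (simp only: of_int_eq_0_iff)
    thus ?thesis by (rule int_golden)
  qed
qed (simp add: ev_def)


lemma exhaust_13:
  fixes x :: 13
  shows "x = 0 \<or> x = 1 \<or> x = 2 \<or> x = 3 \<or> x = 4 \<or> x = 5 \<or> x = 6 \<or> x = 7 \<or> x = 8 \<or> x = 9 \<or> x = 10 \<or> x = 11 \<or> x = 12"
proof (induct x)
  case (of_int z)
  then have "0 \<le> z \<and> z < 13" by simp
  then have "z = 0 \<or> z = 1 \<or> z = 2 \<or> z = 3 \<or> z = 4 \<or> z = 5 \<or> z = 6 \<or> z = 7 \<or> z = 8 \<or> z = 9 \<or> z = 10 \<or> z = 11 \<or> z = 12" by presburger
  then show ?case by auto
qed

lemma forall_13: "(\<forall>x::13. P x) \<longleftrightarrow> P 0 \<and> P 1 \<and> P 2 \<and> P 3 \<and> P 4 \<and> P 5 \<and> P 6 \<and> P 7 \<and> P 8 \<and> P 9 \<and> P 10 \<and> P 11 \<and> P 12"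
proof
  assume "P 0 \<and> P 1 \<and> P 2 \<and> P 3 \<and> P 4 \<and> P 5 \<and> P 6 \<and> P 7 \<and> P 8 \<and> P 9 \<and> P 10 \<and> P 11 \<and> P 12"
  thus "\<forall>x::13. P x" using exhaust_13 by metis
qed simp

lemma ev_add: "ev f x + ev f y = ev f (fst x + fst y, snd x + snd y)"
  by (simp add: ev_def algebra_simps)
lemma ev_sub: "ev f x - ev f y = ev f (fst x - fst y, snd x - snd y)"
  by (simp add: ev_def algebra_simps)
lemma ev_mult: "f*f = 1 - f \<Longrightarrow> ev f x * ev f y = ev f (fst x * fst y + snd x * snd y, fst x * snd y + snd x * fst y - snd x * snd y)"
proof -
  assume h: "f*f = 1 - f"
  have "ev f x * ev f y = of_int (fst x) * of_int (fst y) + (of_int (fst x) * of_int (snd y) + of_int (snd x) * of_int (fst y)) * f + of_int (snd x) * of_int (snd y) * (f*f)"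
    by (simp add: ev_def algebra_simps)
  also have "\<dots> = ev f (fst x * fst y + snd x * snd y, fst x * snd y + snd x * fst y - snd x * snd y)"
    unfolding h ev_def by (simp add: algebra_simps)
  finally show ?thesis .
qed

lemma B1_ent:
  "B1 \<phi> $ 1 $ 1 = ev \<phi> (0,0)"
  "B1 \<phi> $ 1 $ 2 = ev \<phi> (0,0)"
  "B1 \<phi> $ 1 $ 3 = ev \<phi> (1,0)"
  "B1 \<phi> $ 2 $ 1 = ev \<phi> (1,0)"
  "B1 \<phi> $ 2 $ 2 = ev \<phi> (0,0)"
  "B1 \<phi> $ 2 $ 3 = ev \<phi> (0,0)"
  "B1 \<phi> $ 3 $ 1 = ev \<phi> (1,0)"
  "B1 \<phi> $ 3 $ 2 = ev \<phi> (0,0)"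
  "B1 \<phi> $ 3 $ 3 = ev \<phi> (-1,0)"
  "B1 \<phi> $ 4 $ 1 = ev \<phi> (0,0)"
  "B1 \<phi> $ 4 $ 2 = ev \<phi> (1,0)"
  "B1 \<phi> $ 4 $ 3 = ev \<phi> (0,0)"
  "B1 \<phi> $ 5 $ 1 = ev \<phi> (0,0)"
  "B1 \<phi> $ 5 $ 2 = ev \<phi> (1,0)"
  "B1 \<phi> $ 5 $ 3 = ev \<phi> (-1,0)"
  "B1 \<phi> $ 6 $ 1 = ev \<phi> (1,0)"
  "B1 \<phi> $ 6 $ 2 = ev \<phi> (-1,0)"
  "B1 \<phi> $ 6 $ 3 = ev \<phi> (0,0)"
  "B1 \<phi> $ 7 $ 1 = ev \<phi> (1,0)"
  "B1 \<phi> $ 7 $ 2 = ev \<phi> (0,1)"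
  "B1 \<phi> $ 7 $ 3 = ev \<phi> (-1,0)"
  "B1 \<phi> $ 8 $ 1 = ev \<phi> (0,1)"
  "B1 \<phi> $ 8 $ 2 = ev \<phi> (0,-1)"
  "B1 \<phi> $ 8 $ 3 = ev \<phi> (1,0)"
  "B1 \<phi> $ 9 $ 1 = ev \<phi> (0,-1)"
  "B1 \<phi> $ 9 $ 2 = ev \<phi> (-1,1)"
  "B1 \<phi> $ 9 $ 3 = ev \<phi> (0,0)"
  "B1 \<phi> $ 10 $ 1 = ev \<phi> (1,0)"
  "B1 \<phi> $ 10 $ 2 = ev \<phi> (0,0)"
  "B1 \<phi> $ 10 $ 3 = ev \<phi> (0,-1)"
  "B1 \<phi> $ 11 $ 1 = ev \<phi> (2,1)"
  "B1 \<phi> $ 11 $ 2 = ev \<phi> (-1,-1)"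
  "B1 \<phi> $ 11 $ 3 = ev \<phi> (0,1)"
  "B1 \<phi> $ 12 $ 1 = ev \<phi> (-1,1)"
  "B1 \<phi> $ 12 $ 2 = ev \<phi> (0,-1)"
  "B1 \<phi> $ 12 $ 3 = ev \<phi> (-1,2)"
  "B1 \<phi> $ 0 $ 1 = ev \<phi> (1,-2)"
  "B1 \<phi> $ 0 $ 2 = ev \<phi> (2,-3)"
  "B1 \<phi> $ 0 $ 3 = ev \<phi> (-1,1)"
  by (simp_all add: B1_def vector_def ev_def)

lemma B2_ent:
  "B2 \<phi> $ 1 $ 1 = ev \<phi> (0,0)"
  "B2 \<phi> $ 1 $ 2 = ev \<phi> (0,0)"
  "B2 \<phi> $ 1 $ 3 = ev \<phi> (1,0)"
  "B2 \<phi> $ 2 $ 1 = ev \<phi> (1,0)"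
  "B2 \<phi> $ 2 $ 2 = ev \<phi> (0,0)"
  "B2 \<phi> $ 2 $ 3 = ev \<phi> (0,0)"
  "B2 \<phi> $ 3 $ 1 = ev \<phi> (1,0)"
  "B2 \<phi> $ 3 $ 2 = ev \<phi> (0,0)"
  "B2 \<phi> $ 3 $ 3 = ev \<phi> (-1,0)"
  "B2 \<phi> $ 4 $ 1 = ev \<phi> (0,0)"
  "B2 \<phi> $ 4 $ 2 = ev \<phi> (1,0)"
  "B2 \<phi> $ 4 $ 3 = ev \<phi> (0,0)"
  "B2 \<phi> $ 5 $ 1 = ev \<phi> (0,0)"
  "B2 \<phi> $ 5 $ 2 = ev \<phi> (1,0)"
  "B2 \<phi> $ 5 $ 3 = ev \<phi> (-1,0)"
  "B2 \<phi> $ 6 $ 1 = ev \<phi> (1,0)"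
  "B2 \<phi> $ 6 $ 2 = ev \<phi> (-1,0)"
  "B2 \<phi> $ 6 $ 3 = ev \<phi> (0,0)"
  "B2 \<phi> $ 7 $ 1 = ev \<phi> (1,0)"
  "B2 \<phi> $ 7 $ 2 = ev \<phi> (0,1)"
  "B2 \<phi> $ 7 $ 3 = ev \<phi> (-1,0)"
  "B2 \<phi> $ 8 $ 1 = ev \<phi> (0,1)"
  "B2 \<phi> $ 8 $ 2 = ev \<phi> (0,-1)"
  "B2 \<phi> $ 8 $ 3 = ev \<phi> (1,0)"
  "B2 \<phi> $ 9 $ 1 = ev \<phi> (0,-1)"
  "B2 \<phi> $ 9 $ 2 = ev \<phi> (-1,1)"
  "B2 \<phi> $ 9 $ 3 = ev \<phi> (0,0)"
  "B2 \<phi> $ 10 $ 1 = ev \<phi> (1,0)"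
  "B2 \<phi> $ 10 $ 2 = ev \<phi> (0,0)"
  "B2 \<phi> $ 10 $ 3 = ev \<phi> (0,-1)"
  "B2 \<phi> $ 11 $ 1 = ev \<phi> (2,1)"
  "B2 \<phi> $ 11 $ 2 = ev \<phi> (-3,-1)"
  "B2 \<phi> $ 11 $ 3 = ev \<phi> (2,1)"
  "B2 \<phi> $ 12 $ 1 = ev \<phi> (-1,-1)"
  "B2 \<phi> $ 12 $ 2 = ev \<phi> (-2,1)"
  "B2 \<phi> $ 12 $ 3 = ev \<phi> (1,0)"
  "B2 \<phi> $ 0 $ 1 = ev \<phi> (-1,0)"
  "B2 \<phi> $ 0 $ 2 = ev \<phi> (2,-1)"
  "B2 \<phi> $ 0 $ 3 = ev \<phi> (-1,-1)"
  by (simp_all add: B2_def vector_def ev_def)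

lemma B1m_ent:
  "B1 (-1-\<phi>) $ 1 $ 1 = ev \<phi> (0,0)"
  "B1 (-1-\<phi>) $ 1 $ 2 = ev \<phi> (0,0)"
  "B1 (-1-\<phi>) $ 1 $ 3 = ev \<phi> (1,0)"
  "B1 (-1-\<phi>) $ 2 $ 1 = ev \<phi> (1,0)"
  "B1 (-1-\<phi>) $ 2 $ 2 = ev \<phi> (0,0)"
  "B1 (-1-\<phi>) $ 2 $ 3 = ev \<phi> (0,0)"
  "B1 (-1-\<phi>) $ 3 $ 1 = ev \<phi> (1,0)"
  "B1 (-1-\<phi>) $ 3 $ 2 = ev \<phi> (0,0)"
  "B1 (-1-\<phi>) $ 3 $ 3 = ev \<phi> (-1,0)"
  "B1 (-1-\<phi>) $ 4 $ 1 = ev \<phi> (0,0)"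
  "B1 (-1-\<phi>) $ 4 $ 2 = ev \<phi> (1,0)"
  "B1 (-1-\<phi>) $ 4 $ 3 = ev \<phi> (0,0)"
  "B1 (-1-\<phi>) $ 5 $ 1 = ev \<phi> (0,0)"
  "B1 (-1-\<phi>) $ 5 $ 2 = ev \<phi> (1,0)"
  "B1 (-1-\<phi>) $ 5 $ 3 = ev \<phi> (-1,0)"
  "B1 (-1-\<phi>) $ 6 $ 1 = ev \<phi> (1,0)"
  "B1 (-1-\<phi>) $ 6 $ 2 = ev \<phi> (-1,0)"
  "B1 (-1-\<phi>) $ 6 $ 3 = ev \<phi> (0,0)"
  "B1 (-1-\<phi>) $ 7 $ 1 = ev \<phi> (1,0)"
  "B1 (-1-\<phi>) $ 7 $ 2 = ev \<phi> (-1,-1)"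
  "B1 (-1-\<phi>) $ 7 $ 3 = ev \<phi> (-1,0)"
  "B1 (-1-\<phi>) $ 8 $ 1 = ev \<phi> (-1,-1)"
  "B1 (-1-\<phi>) $ 8 $ 2 = ev \<phi> (1,1)"
  "B1 (-1-\<phi>) $ 8 $ 3 = ev \<phi> (1,0)"
  "B1 (-1-\<phi>) $ 9 $ 1 = ev \<phi> (1,1)"
  "B1 (-1-\<phi>) $ 9 $ 2 = ev \<phi> (-2,-1)"
  "B1 (-1-\<phi>) $ 9 $ 3 = ev \<phi> (0,0)"
  "B1 (-1-\<phi>) $ 10 $ 1 = ev \<phi> (1,0)"
  "B1 (-1-\<phi>) $ 10 $ 2 = ev \<phi> (0,0)"
  "B1 (-1-\<phi>) $ 10 $ 3 = ev \<phi> (1,1)"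
  "B1 (-1-\<phi>) $ 11 $ 1 = ev \<phi> (1,-1)"
  "B1 (-1-\<phi>) $ 11 $ 2 = ev \<phi> (0,1)"
  "B1 (-1-\<phi>) $ 11 $ 3 = ev \<phi> (-1,-1)"
  "B1 (-1-\<phi>) $ 12 $ 1 = ev \<phi> (-2,-1)"
  "B1 (-1-\<phi>) $ 12 $ 2 = ev \<phi> (1,1)"
  "B1 (-1-\<phi>) $ 12 $ 3 = ev \<phi> (-3,-2)"
  "B1 (-1-\<phi>) $ 0 $ 1 = ev \<phi> (3,2)"
  "B1 (-1-\<phi>) $ 0 $ 2 = ev \<phi> (5,3)"
  "B1 (-1-\<phi>) $ 0 $ 3 = ev \<phi> (-2,-1)"
  by (simp_all add: B1_def vector_def ev_def algebra_simps)

lemma Collect_13: "{x::13. P x} = (if P 0 then {0} else {}) \<union> (if P 1 then {1} else {}) \<union> (if P 2 then {2} else {}) \<union> (if P 3 then {3} else {}) \<union> (if P 4 then {4} else {}) \<union> (if P 5 then {5} else {}) \<union> (if P 6 then {6} else {}) \<union> (if P 7 then {7} else {}) \<union> (if P 8 then {8} else {}) \<union> (if P 9 then {9} else {}) \<union> (if P 10 then {10} else {}) \<union> (if P 11 then {11} else {}) \<union> (if P 12 then {12} else {})"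
proof (rule set_eqI)
  fix x :: 13
  show "x \<in> {x. P x} \<longleftrightarrow> x \<in> (if P 0 then {0} else {}) \<union> (if P 1 then {1} else {}) \<union> (if P 2 then {2} else {}) \<union> (if P 3 then {3} else {}) \<union> (if P 4 then {4} else {}) \<union> (if P 5 then {5} else {}) \<union> (if P 6 then {6} else {}) \<union> (if P 7 then {7} else {}) \<union> (if P 8 then {8} else {}) \<union> (if P 9 then {9} else {}) \<union> (if P 10 then {10} else {}) \<union> (if P 11 then {11} else {}) \<union> (if P 12 then {12} else {})"
    using exhaust_13[of x] by (elim disjE) simp_all
qed

context
  fixes \<phi> :: complex
  assumes ph: "\<phi>*\<phi> = 1 - \<phi>"
begin

lemma S1_tab:
  "Sset (B1 \<phi>) 0 1 = {0,1,11}"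
  "Sset (B1 \<phi>) 0 2 = {0,2}"
  "Sset (B1 \<phi>) 0 3 = {0,3}"
  "Sset (B1 \<phi>) 0 4 = {0,4,8}"
  "Sset (B1 \<phi>) 0 5 = {0,5,12}"
  "Sset (B1 \<phi>) 0 6 = {0,6}"
  "Sset (B1 \<phi>) 0 7 = {0,7}"
  "Sset (B1 \<phi>) 0 8 = {0,4,8}"
  "Sset (B1 \<phi>) 0 9 = {0,9}"
  "Sset (B1 \<phi>) 0 10 = {0,10}"
  "Sset (B1 \<phi>) 0 11 = {0,1,11}"
  "Sset (B1 \<phi>) 0 12 = {0,5,12}"
  "Sset (B1 \<phi>) 1 0 = {0,1,11}"
  "Sset (B1 \<phi>) 1 2 = {1,2,3,10}"
  "Sset (B1 \<phi>) 1 3 = {1,2,3,10}"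
  "Sset (B1 \<phi>) 1 4 = {1,4,5}"
  "Sset (B1 \<phi>) 1 5 = {1,4,5}"
  "Sset (B1 \<phi>) 1 6 = {1,6,8}"
  "Sset (B1 \<phi>) 1 7 = {1,7,9}"
  "Sset (B1 \<phi>) 1 8 = {1,6,8}"
  "Sset (B1 \<phi>) 1 9 = {1,7,9}"
  "Sset (B1 \<phi>) 1 10 = {1,2,3,10}"
  "Sset (B1 \<phi>) 1 11 = {0,1,11}"
  "Sset (B1 \<phi>) 1 12 = {1,12}"
  "Sset (B1 \<phi>) 2 0 = {0,2}"
  "Sset (B1 \<phi>) 2 1 = {1,2,3,10}"
  "Sset (B1 \<phi>) 2 3 = {1,2,3,10}"
  "Sset (B1 \<phi>) 2 4 = {2,4,6,9}"
  "Sset (B1 \<phi>) 2 5 = {2,5}"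
  "Sset (B1 \<phi>) 2 6 = {2,4,6,9}"
  "Sset (B1 \<phi>) 2 7 = {2,7,8}"
  "Sset (B1 \<phi>) 2 8 = {2,7,8}"
  "Sset (B1 \<phi>) 2 9 = {2,4,6,9}"
  "Sset (B1 \<phi>) 2 10 = {1,2,3,10}"
  "Sset (B1 \<phi>) 2 11 = {2,11,12}"
  "Sset (B1 \<phi>) 2 12 = {2,11,12}"
  "Sset (B1 \<phi>) 3 0 = {0,3}"
  "Sset (B1 \<phi>) 3 1 = {1,2,3,10}"
  "Sset (B1 \<phi>) 3 2 = {1,2,3,10}"
  "Sset (B1 \<phi>) 3 4 = {3,4,7}"
  "Sset (B1 \<phi>) 3 5 = {3,5,6}"
  "Sset (B1 \<phi>) 3 6 = {3,5,6}"
  "Sset (B1 \<phi>) 3 7 = {3,4,7}"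
  "Sset (B1 \<phi>) 3 8 = {3,8}"
  "Sset (B1 \<phi>) 3 9 = {3,9}"
  "Sset (B1 \<phi>) 3 10 = {1,2,3,10}"
  "Sset (B1 \<phi>) 3 11 = {3,11}"
  "Sset (B1 \<phi>) 3 12 = {3,12}"
  "Sset (B1 \<phi>) 4 0 = {0,4,8}"
  "Sset (B1 \<phi>) 4 1 = {1,4,5}"
  "Sset (B1 \<phi>) 4 2 = {2,4,6,9}"
  "Sset (B1 \<phi>) 4 3 = {3,4,7}"
  "Sset (B1 \<phi>) 4 5 = {1,4,5}"
  "Sset (B1 \<phi>) 4 6 = {2,4,6,9}"
  "Sset (B1 \<phi>) 4 7 = {3,4,7}"
  "Sset (B1 \<phi>) 4 8 = {0,4,8}"
  "Sset (B1 \<phi>) 4 9 = {2,4,6,9}"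
  "Sset (B1 \<phi>) 4 10 = {4,10,12}"
  "Sset (B1 \<phi>) 4 11 = {4,11}"
  "Sset (B1 \<phi>) 4 12 = {4,10,12}"
  "Sset (B1 \<phi>) 5 0 = {0,5,12}"
  "Sset (B1 \<phi>) 5 1 = {1,4,5}"
  "Sset (B1 \<phi>) 5 2 = {2,5}"
  "Sset (B1 \<phi>) 5 3 = {3,5,6}"
  "Sset (B1 \<phi>) 5 4 = {1,4,5}"
  "Sset (B1 \<phi>) 5 6 = {3,5,6}"
  "Sset (B1 \<phi>) 5 7 = {5,7,11}"
  "Sset (B1 \<phi>) 5 8 = {5,8,9}"
  "Sset (B1 \<phi>) 5 9 = {5,8,9}"
  "Sset (B1 \<phi>) 5 10 = {5,10}"
  "Sset (B1 \<phi>) 5 11 = {5,7,11}"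
  "Sset (B1 \<phi>) 5 12 = {0,5,12}"
  "Sset (B1 \<phi>) 6 0 = {0,6}"
  "Sset (B1 \<phi>) 6 1 = {1,6,8}"
  "Sset (B1 \<phi>) 6 2 = {2,4,6,9}"
  "Sset (B1 \<phi>) 6 3 = {3,5,6}"
  "Sset (B1 \<phi>) 6 4 = {2,4,6,9}"
  "Sset (B1 \<phi>) 6 5 = {3,5,6}"
  "Sset (B1 \<phi>) 6 7 = {6,7,10}"
  "Sset (B1 \<phi>) 6 8 = {1,6,8}"
  "Sset (B1 \<phi>) 6 9 = {2,4,6,9}"
  "Sset (B1 \<phi>) 6 10 = {6,7,10}"
  "Sset (B1 \<phi>) 6 11 = {6,11}"
  "Sset (B1 \<phi>) 6 12 = {6,12}"
  "Sset (B1 \<phi>) 7 0 = {0,7}"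
  "Sset (B1 \<phi>) 7 1 = {1,7,9}"
  "Sset (B1 \<phi>) 7 2 = {2,7,8}"
  "Sset (B1 \<phi>) 7 3 = {3,4,7}"
  "Sset (B1 \<phi>) 7 4 = {3,4,7}"
  "Sset (B1 \<phi>) 7 5 = {5,7,11}"
  "Sset (B1 \<phi>) 7 6 = {6,7,10}"
  "Sset (B1 \<phi>) 7 8 = {2,7,8}"
  "Sset (B1 \<phi>) 7 9 = {1,7,9}"
  "Sset (B1 \<phi>) 7 10 = {6,7,10}"
  "Sset (B1 \<phi>) 7 11 = {5,7,11}"
  "Sset (B1 \<phi>) 7 12 = {7,12}"
  "Sset (B1 \<phi>) 8 0 = {0,4,8}"
  "Sset (B1 \<phi>) 8 1 = {1,6,8}"
  "Sset (B1 \<phi>) 8 2 = {2,7,8}"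
  "Sset (B1 \<phi>) 8 3 = {3,8}"
  "Sset (B1 \<phi>) 8 4 = {0,4,8}"
  "Sset (B1 \<phi>) 8 5 = {5,8,9}"
  "Sset (B1 \<phi>) 8 6 = {1,6,8}"
  "Sset (B1 \<phi>) 8 7 = {2,7,8}"
  "Sset (B1 \<phi>) 8 9 = {5,8,9}"
  "Sset (B1 \<phi>) 8 10 = {8,10}"
  "Sset (B1 \<phi>) 8 11 = {8,11}"
  "Sset (B1 \<phi>) 8 12 = {8,12}"
  "Sset (B1 \<phi>) 9 0 = {0,9}"
  "Sset (B1 \<phi>) 9 1 = {1,7,9}"
  "Sset (B1 \<phi>) 9 2 = {2,4,6,9}"
  "Sset (B1 \<phi>) 9 3 = {3,9}"
  "Sset (B1 \<phi>) 9 4 = {2,4,6,9}"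
  "Sset (B1 \<phi>) 9 5 = {5,8,9}"
  "Sset (B1 \<phi>) 9 6 = {2,4,6,9}"
  "Sset (B1 \<phi>) 9 7 = {1,7,9}"
  "Sset (B1 \<phi>) 9 8 = {5,8,9}"
  "Sset (B1 \<phi>) 9 10 = {9,10}"
  "Sset (B1 \<phi>) 9 11 = {9,11}"
  "Sset (B1 \<phi>) 9 12 = {9,12}"
  "Sset (B1 \<phi>) 10 0 = {0,10}"
  "Sset (B1 \<phi>) 10 1 = {1,2,3,10}"
  "Sset (B1 \<phi>) 10 2 = {1,2,3,10}"
  "Sset (B1 \<phi>) 10 3 = {1,2,3,10}"
  "Sset (B1 \<phi>) 10 4 = {4,10,12}"
  "Sset (B1 \<phi>) 10 5 = {5,10}"
  "Sset (B1 \<phi>) 10 6 = {6,7,10}"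
  "Sset (B1 \<phi>) 10 7 = {6,7,10}"
  "Sset (B1 \<phi>) 10 8 = {8,10}"
  "Sset (B1 \<phi>) 10 9 = {9,10}"
  "Sset (B1 \<phi>) 10 11 = {10,11}"
  "Sset (B1 \<phi>) 10 12 = {4,10,12}"
  "Sset (B1 \<phi>) 11 0 = {0,1,11}"
  "Sset (B1 \<phi>) 11 1 = {0,1,11}"
  "Sset (B1 \<phi>) 11 2 = {2,11,12}"
  "Sset (B1 \<phi>) 11 3 = {3,11}"
  "Sset (B1 \<phi>) 11 4 = {4,11}"
  "Sset (B1 \<phi>) 11 5 = {5,7,11}"
  "Sset (B1 \<phi>) 11 6 = {6,11}"
  "Sset (B1 \<phi>) 11 7 = {5,7,11}"
  "Sset (B1 \<phi>) 11 8 = {8,11}"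
  "Sset (B1 \<phi>) 11 9 = {9,11}"
  "Sset (B1 \<phi>) 11 10 = {10,11}"
  "Sset (B1 \<phi>) 11 12 = {2,11,12}"
  "Sset (B1 \<phi>) 12 0 = {0,5,12}"
  "Sset (B1 \<phi>) 12 1 = {1,12}"
  "Sset (B1 \<phi>) 12 2 = {2,11,12}"
  "Sset (B1 \<phi>) 12 3 = {3,12}"
  "Sset (B1 \<phi>) 12 4 = {4,10,12}"
  "Sset (B1 \<phi>) 12 5 = {0,5,12}"
  "Sset (B1 \<phi>) 12 6 = {6,12}"
  "Sset (B1 \<phi>) 12 7 = {7,12}"
  "Sset (B1 \<phi>) 12 8 = {8,12}"
  "Sset (B1 \<phi>) 12 9 = {9,12}"
  "Sset (B1 \<phi>) 12 10 = {4,10,12}"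
  "Sset (B1 \<phi>) 12 11 = {2,11,12}"
  unfolding set_eq_iff Sset_def mem_Collect_eq conc_def det3_def forall_13 B1_ent
    by (simp_all add: ev_add ev_sub ev_mult[OF ph] ev0[OF ph])

lemma S2_tab:
  "Sset (B2 \<phi>) 0 1 = {0,1,11}"
  "Sset (B2 \<phi>) 0 2 = {0,2}"
  "Sset (B2 \<phi>) 0 3 = {0,3}"
  "Sset (B2 \<phi>) 0 4 = {0,4,8}"
  "Sset (B2 \<phi>) 0 5 = {0,5,12}"
  "Sset (B2 \<phi>) 0 6 = {0,6}"
  "Sset (B2 \<phi>) 0 7 = {0,7}"
  "Sset (B2 \<phi>) 0 8 = {0,4,8}"
  "Sset (B2 \<phi>) 0 9 = {0,9}"
  "Sset (B2 \<phi>) 0 10 = {0,10}"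
  "Sset (B2 \<phi>) 0 11 = {0,1,11}"
  "Sset (B2 \<phi>) 0 12 = {0,5,12}"
  "Sset (B2 \<phi>) 1 0 = {0,1,11}"
  "Sset (B2 \<phi>) 1 2 = {1,2,3,10}"
  "Sset (B2 \<phi>) 1 3 = {1,2,3,10}"
  "Sset (B2 \<phi>) 1 4 = {1,4,5}"
  "Sset (B2 \<phi>) 1 5 = {1,4,5}"
  "Sset (B2 \<phi>) 1 6 = {1,6,8}"
  "Sset (B2 \<phi>) 1 7 = {1,7,9}"
  "Sset (B2 \<phi>) 1 8 = {1,6,8}"
  "Sset (B2 \<phi>) 1 9 = {1,7,9}"
  "Sset (B2 \<phi>) 1 10 = {1,2,3,10}"
  "Sset (B2 \<phi>) 1 11 = {0,1,11}"
  "Sset (B2 \<phi>) 1 12 = {1,12}"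
  "Sset (B2 \<phi>) 2 0 = {0,2}"
  "Sset (B2 \<phi>) 2 1 = {1,2,3,10}"
  "Sset (B2 \<phi>) 2 3 = {1,2,3,10}"
  "Sset (B2 \<phi>) 2 4 = {2,4,6,9}"
  "Sset (B2 \<phi>) 2 5 = {2,5}"
  "Sset (B2 \<phi>) 2 6 = {2,4,6,9}"
  "Sset (B2 \<phi>) 2 7 = {2,7,8}"
  "Sset (B2 \<phi>) 2 8 = {2,7,8}"
  "Sset (B2 \<phi>) 2 9 = {2,4,6,9}"
  "Sset (B2 \<phi>) 2 10 = {1,2,3,10}"
  "Sset (B2 \<phi>) 2 11 = {2,11,12}"
  "Sset (B2 \<phi>) 2 12 = {2,11,12}"
  "Sset (B2 \<phi>) 3 0 = {0,3}"
  "Sset (B2 \<phi>) 3 1 = {1,2,3,10}"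
  "Sset (B2 \<phi>) 3 2 = {1,2,3,10}"
  "Sset (B2 \<phi>) 3 4 = {3,4,7}"
  "Sset (B2 \<phi>) 3 5 = {3,5,6}"
  "Sset (B2 \<phi>) 3 6 = {3,5,6}"
  "Sset (B2 \<phi>) 3 7 = {3,4,7}"
  "Sset (B2 \<phi>) 3 8 = {3,8}"
  "Sset (B2 \<phi>) 3 9 = {3,9}"
  "Sset (B2 \<phi>) 3 10 = {1,2,3,10}"
  "Sset (B2 \<phi>) 3 11 = {3,11}"
  "Sset (B2 \<phi>) 3 12 = {3,12}"
  "Sset (B2 \<phi>) 4 0 = {0,4,8}"
  "Sset (B2 \<phi>) 4 1 = {1,4,5}"
  "Sset (B2 \<phi>) 4 2 = {2,4,6,9}"
  "Sset (B2 \<phi>) 4 3 = {3,4,7}"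
  "Sset (B2 \<phi>) 4 5 = {1,4,5}"
  "Sset (B2 \<phi>) 4 6 = {2,4,6,9}"
  "Sset (B2 \<phi>) 4 7 = {3,4,7}"
  "Sset (B2 \<phi>) 4 8 = {0,4,8}"
  "Sset (B2 \<phi>) 4 9 = {2,4,6,9}"
  "Sset (B2 \<phi>) 4 10 = {4,10,12}"
  "Sset (B2 \<phi>) 4 11 = {4,11}"
  "Sset (B2 \<phi>) 4 12 = {4,10,12}"
  "Sset (B2 \<phi>) 5 0 = {0,5,12}"
  "Sset (B2 \<phi>) 5 1 = {1,4,5}"
  "Sset (B2 \<phi>) 5 2 = {2,5}"
  "Sset (B2 \<phi>) 5 3 = {3,5,6}"
  "Sset (B2 \<phi>) 5 4 = {1,4,5}"
  "Sset (B2 \<phi>) 5 6 = {3,5,6}"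
  "Sset (B2 \<phi>) 5 7 = {5,7,11}"
  "Sset (B2 \<phi>) 5 8 = {5,8,9}"
  "Sset (B2 \<phi>) 5 9 = {5,8,9}"
  "Sset (B2 \<phi>) 5 10 = {5,10}"
  "Sset (B2 \<phi>) 5 11 = {5,7,11}"
  "Sset (B2 \<phi>) 5 12 = {0,5,12}"
  "Sset (B2 \<phi>) 6 0 = {0,6}"
  "Sset (B2 \<phi>) 6 1 = {1,6,8}"
  "Sset (B2 \<phi>) 6 2 = {2,4,6,9}"
  "Sset (B2 \<phi>) 6 3 = {3,5,6}"
  "Sset (B2 \<phi>) 6 4 = {2,4,6,9}"
  "Sset (B2 \<phi>) 6 5 = {3,5,6}"
  "Sset (B2 \<phi>) 6 7 = {6,7,10}"
  "Sset (B2 \<phi>) 6 8 = {1,6,8}"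
  "Sset (B2 \<phi>) 6 9 = {2,4,6,9}"
  "Sset (B2 \<phi>) 6 10 = {6,7,10}"
  "Sset (B2 \<phi>) 6 11 = {6,11}"
  "Sset (B2 \<phi>) 6 12 = {6,12}"
  "Sset (B2 \<phi>) 7 0 = {0,7}"
  "Sset (B2 \<phi>) 7 1 = {1,7,9}"
  "Sset (B2 \<phi>) 7 2 = {2,7,8}"
  "Sset (B2 \<phi>) 7 3 = {3,4,7}"
  "Sset (B2 \<phi>) 7 4 = {3,4,7}"
  "Sset (B2 \<phi>) 7 5 = {5,7,11}"
  "Sset (B2 \<phi>) 7 6 = {6,7,10}"
  "Sset (B2 \<phi>) 7 8 = {2,7,8}"
  "Sset (B2 \<phi>) 7 9 = {1,7,9}"
  "Sset (B2 \<phi>) 7 10 = {6,7,10}"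
  "Sset (B2 \<phi>) 7 11 = {5,7,11}"
  "Sset (B2 \<phi>) 7 12 = {7,12}"
  "Sset (B2 \<phi>) 8 0 = {0,4,8}"
  "Sset (B2 \<phi>) 8 1 = {1,6,8}"
  "Sset (B2 \<phi>) 8 2 = {2,7,8}"
  "Sset (B2 \<phi>) 8 3 = {3,8}"
  "Sset (B2 \<phi>) 8 4 = {0,4,8}"
  "Sset (B2 \<phi>) 8 5 = {5,8,9}"
  "Sset (B2 \<phi>) 8 6 = {1,6,8}"
  "Sset (B2 \<phi>) 8 7 = {2,7,8}"
  "Sset (B2 \<phi>) 8 9 = {5,8,9}"
  "Sset (B2 \<phi>) 8 10 = {8,10}"
  "Sset (B2 \<phi>) 8 11 = {8,11}"
  "Sset (B2 \<phi>) 8 12 = {8,12}"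
  "Sset (B2 \<phi>) 9 0 = {0,9}"
  "Sset (B2 \<phi>) 9 1 = {1,7,9}"
  "Sset (B2 \<phi>) 9 2 = {2,4,6,9}"
  "Sset (B2 \<phi>) 9 3 = {3,9}"
  "Sset (B2 \<phi>) 9 4 = {2,4,6,9}"
  "Sset (B2 \<phi>) 9 5 = {5,8,9}"
  "Sset (B2 \<phi>) 9 6 = {2,4,6,9}"
  "Sset (B2 \<phi>) 9 7 = {1,7,9}"
  "Sset (B2 \<phi>) 9 8 = {5,8,9}"
  "Sset (B2 \<phi>) 9 10 = {9,10}"
  "Sset (B2 \<phi>) 9 11 = {9,11}"
  "Sset (B2 \<phi>) 9 12 = {9,12}"
  "Sset (B2 \<phi>) 10 0 = {0,10}"
  "Sset (B2 \<phi>) 10 1 = {1,2,3,10}"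
  "Sset (B2 \<phi>) 10 2 = {1,2,3,10}"
  "Sset (B2 \<phi>) 10 3 = {1,2,3,10}"
  "Sset (B2 \<phi>) 10 4 = {4,10,12}"
  "Sset (B2 \<phi>) 10 5 = {5,10}"
  "Sset (B2 \<phi>) 10 6 = {6,7,10}"
  "Sset (B2 \<phi>) 10 7 = {6,7,10}"
  "Sset (B2 \<phi>) 10 8 = {8,10}"
  "Sset (B2 \<phi>) 10 9 = {9,10}"
  "Sset (B2 \<phi>) 10 11 = {10,11}"
  "Sset (B2 \<phi>) 10 12 = {4,10,12}"
  "Sset (B2 \<phi>) 11 0 = {0,1,11}"
  "Sset (B2 \<phi>) 11 1 = {0,1,11}"
  "Sset (B2 \<phi>) 11 2 = {2,11,12}"
  "Sset (B2 \<phi>) 11 3 = {3,11}"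
  "Sset (B2 \<phi>) 11 4 = {4,11}"
  "Sset (B2 \<phi>) 11 5 = {5,7,11}"
  "Sset (B2 \<phi>) 11 6 = {6,11}"
  "Sset (B2 \<phi>) 11 7 = {5,7,11}"
  "Sset (B2 \<phi>) 11 8 = {8,11}"
  "Sset (B2 \<phi>) 11 9 = {9,11}"
  "Sset (B2 \<phi>) 11 10 = {10,11}"
  "Sset (B2 \<phi>) 11 12 = {2,11,12}"
  "Sset (B2 \<phi>) 12 0 = {0,5,12}"
  "Sset (B2 \<phi>) 12 1 = {1,12}"
  "Sset (B2 \<phi>) 12 2 = {2,11,12}"
  "Sset (B2 \<phi>) 12 3 = {3,12}"
  "Sset (B2 \<phi>) 12 4 = {4,10,12}"
  "Sset (B2 \<phi>) 12 5 = {0,5,12}"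
  "Sset (B2 \<phi>) 12 6 = {6,12}"
  "Sset (B2 \<phi>) 12 7 = {7,12}"
  "Sset (B2 \<phi>) 12 8 = {8,12}"
  "Sset (B2 \<phi>) 12 9 = {9,12}"
  "Sset (B2 \<phi>) 12 10 = {4,10,12}"
  "Sset (B2 \<phi>) 12 11 = {2,11,12}"
  unfolding set_eq_iff Sset_def mem_Collect_eq conc_def det3_def forall_13 B2_ent
    by (simp_all add: ev_add ev_sub ev_mult[OF ph] ev0[OF ph])

end


lemma final_alg:
  fixes u q w g k :: complex
  assumes "q = 1 - u" "u*u = u + 1" "q*w = q + 1" "k = g - q*(g-1)"
    "(q+1)*k*u - q*k*u*g + q*q*u*g - q*(q+1)*g = 0"
  shows "(g+1)*((g+1)*(g+1) + 2*(g+1) - 4) = 0"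
  using assms by algebra

lemma core:
  fixes y0 y1 y2 y3 y4 y5 y6 y7 y8 y9 y10 y11 y12 :: "complex^3"
  assumes s0: "y0$2 = 0" "y0$3 = 0" and d0: "y0$1 \<noteq> 0"
    and s1: "y1$1 = 0" "y1$3 = 0" and d1: "y1$2 \<noteq> 0"
    and s3: "y3$1 = 0" "y3$2 = 0" and d3: "y3$3 \<noteq> 0"
    and s6: "y6$1 = 1" "y6$2 = 1" "y6$3 = 1"
    and n2: "det3 y2 y1 y3 \<noteq> 0" and n4: "det3 y4 y1 y3 \<noteq> 0" and n5: "det3 y0 y5 y3 \<noteq> 0"
    and n7: "det3 y7 y1 y3 \<noteq> 0" and n8: "det3 y0 y8 y3 \<noteq> 0" and n9: "det3 y9 y1 y3 \<noteq> 0"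
    and n10: "det3 y10 y1 y3 \<noteq> 0" and n11: "det3 y11 y1 y3 \<noteq> 0" and n12: "det3 y12 y1 y3 \<noteq> 0"
    and e012: "det3 y0 y1 y2 = 0" and e019: "det3 y0 y1 y9 = 0" and e034: "det3 y0 y3 y4 = 0"
    and e135: "det3 y1 y3 y5 = 0" and e138: "det3 y1 y3 y8 = 0" and e236: "det3 y2 y3 y6 = 0"
    and e167: "det3 y1 y6 y7 = 0" and e068: "det3 y0 y6 y8 = 0" and e245: "det3 y2 y4 y5 = 0"
    and e057: "det3 y0 y5 y7 = 0" and e478: "det3 y4 y7 y8 = 0" and e569: "det3 y5 y6 y9 = 0"
    and e3911: "det3 y3 y9 y11 = 0" and e3712: "det3 y3 y7 y12 = 0" and e4610: "det3 y4 y6 y10 = 0"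
    and e11011: "det3 y1 y10 y11 = 0" and e01012: "det3 y0 y10 y12 = 0" and e41112: "det3 y4 y11 y12 = 0"
  shows "(y10$2/y10$1 + 1) * ((y10$2/y10$1 + 1)*(y10$2/y10$1 + 1) + 2*(y10$2/y10$1 + 1) - 4) = 0"
proof -
  have a2: "y2$1 \<noteq> 0" using n2 s1 s3 by (simp add: det3_def)
  have a4: "y4$1 \<noteq> 0" using n4 s1 s3 by (simp add: det3_def)
  have b5: "y5$2 \<noteq> 0" using n5 s0 s3 by (simp add: det3_def)
  have a7: "y7$1 \<noteq> 0" using n7 s1 s3 by (simp add: det3_def)
  have b8: "y8$2 \<noteq> 0" using n8 s0 s3 by (simp add: det3_def)
  have a9: "y9$1 \<noteq> 0" using n9 s1 s3 by (simp add: det3_def)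
  have a10: "y10$1 \<noteq> 0" using n10 s1 s3 by (simp add: det3_def)
  have a11: "y11$1 \<noteq> 0" using n11 s1 s3 by (simp add: det3_def)
  have a12: "y12$1 \<noteq> 0" using n12 s1 s3 by (simp add: det3_def)
  have c2: "y2$3 = 0" using e012 s0 s1 d0 d1 by (simp add: det3_def)
  have c9: "y9$3 = 0" using e019 s0 s1 d0 d1 by (simp add: det3_def)
  have b4: "y4$2 = 0" using e034 s0 s3 d0 d3 by (simp add: det3_def)
  have a5: "y5$1 = 0" using e135 s1 s3 d1 d3 by (simp add: det3_def)
  have a8: "y8$1 = 0" using e138 s1 s3 d1 d3 by (simp add: det3_def)
  have E1: "y2$2 = y2$1" using e236 s3 s6 c2 d3 by (simp add: det3_def algebra_simps)
  have E2: "y7$3 = y7$1" using e167 s1 s6 d1 by (simp add: det3_def algebra_simps)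
  have E3: "y8$3 = y8$2" using e068 s0 s6 d0 by (simp add: det3_def algebra_simps)
  have "det3 y2 y4 y5 = - (y2$1 * (y4$3 * y5$2 + y4$1 * y5$3))" using c2 b4 a5 E1 by (simp add: det3_def algebra_simps)
  hence E4: "y4$3 * y5$2 + y4$1 * y5$3 = 0" using a2 e245 by simp
  have E5: "y5$2 * y7$1 = y5$3 * y7$2" using e057 s0 d0 E2 by (simp add: det3_def algebra_simps)
  have "det3 y4 y7 y8 = y8$2 * (y4$1 * y7$2 - y4$1 * y7$1 + y4$3 * y7$1)" using b4 a8 E2 E3
    by (simp add: det3_def algebra_simps)
  hence E6: "y4$1 * y7$2 - y4$1 * y7$1 + y4$3 * y7$1 = 0" using e478 b8 by simp
  have E7: "y5$2 * y9$1 + y5$3 * (y9$2 - y9$1) = 0" using e569 a5 c9 s6 by (simp add: det3_def algebra_simps)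
  have E10: "y9$1 * y11$2 = y9$2 * y11$1" using e3911 s3 d3 by (simp add: det3_def algebra_simps)
  have E11: "y7$1 * y12$2 = y7$2 * y12$1" using e3712 s3 d3 by (simp add: det3_def algebra_simps)
  have E12: "y4$1 * (y10$3 - y10$2) + y4$3 * (y10$2 - y10$1) = 0" using e4610 b4 s6 by (simp add: det3_def algebra_simps)
  have E9: "y10$1 * y11$3 = y10$3 * y11$1" using e11011 s1 d1 by (simp add: det3_def algebra_simps)
  have E8: "y10$2 * y12$3 = y10$3 * y12$2" using e01012 s0 d0 by (simp add: det3_def algebra_simps)
  have E13: "y4$1 * (y11$2 * y12$3 - y11$3 * y12$2) + y4$3 * (y11$1 * y12$2 - y11$2 * y12$1) = 0"
    using e41112 b4 by (simp add: det3_def algebra_simps)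
  define u where "u = y7$2 / y7$1"
  define q where "q = y4$3 / y4$1"
  define m where "m = y5$3 / y5$2"
  define w where "w = y9$2 / y9$1"
  define g where "g = y10$2 / y10$1"
  define k where "k = y10$3 / y10$1"
  define s where "s = y11$3 / y11$1"
  define t11 where "t11 = y11$2 / y11$1"
  define r where "r = y12$3 / y12$1"
  define t12 where "t12 = y12$2 / y12$1"
  have R4: "q + m = 0" using E4 a4 b5 unfolding q_def m_def by (simp add: field_simps)
  have R5: "1 = m * u"
  proof -
    have "m*u = (y5$3*y7$2)/(y5$2*y7$1)" unfolding m_def u_def by simp
    also have "\<dots> = 1" using a7 b5 by (simp add: E5[symmetric])
    finally show ?thesis by simp
  qed
  have R6: "u - 1 + q = 0" using E6 a4 a7 unfolding q_def u_def by (simp add: field_simps)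
  have R7: "1 + m * (w - 1) = 0" using E7 a9 b5 unfolding m_def w_def by (simp add: field_simps)
  have R10: "t11 = w" using E10 a9 a11 unfolding t11_def w_def by (simp add: field_simps)
  have R11: "t12 = u" using E11 a7 a12 unfolding t12_def u_def by (simp add: field_simps)
  have R12: "(k - g) + q * (g - 1) = 0" using E12 a4 a10 unfolding k_def g_def q_def
    by (simp add: field_simps) (metis distrib_left)
  have R9: "s = k" using E9 a10 a11 unfolding s_def k_def by (simp add: field_simps)
  have R8: "g * r = k * t12" using E8 a10 a12 unfolding g_def r_def k_def t12_def by (simp add: field_simps)
  have "(y4$1*y11$1*y12$1) * ((t11 * r - s * t12) + q * (t12 - t11)) = y4$1 * (y11$2 * y12$3 - y11$3 * y12$2) + y4$3 * (y11$1 * y12$2 - y11$2 * y12$1)"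
    using a4 a11 a12 unfolding t11_def r_def s_def t12_def q_def by (simp add: field_simps; simp add: algebra_simps)
  hence R13: "(t11 * r - s * t12) + q * (t12 - t11) = 0" using E13 a4 a11 a12 by simp
  have q1: "q = 1 - u" using R6 by (simp add: algebra_simps)
  have uu: "u*u = u + 1" using R4 R5 q1 by algebra
  have qw: "q*w = q + 1" using R4 R7 by algebra
  have kk: "k = g - q*(g-1)" using R12 by (simp add: algebra_simps)
  have P: "(q+1)*k*u - q*k*u*g + q*q*u*g - q*(q+1)*g = 0"
  proof -
    have "q * g * ((t11 * r - s * t12) + q * (t12 - t11)) = 0" using R13 by simp
    thus ?thesis using R10 R11 R9 R8 qw by algebra
  qed
  show ?thesis using final_alg[OF q1 uu qw kk P] unfolding g_def .
qed


lemma pclass_eq_cr: assumes "pclass a = pclass b" shows "cr a b = 0"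
proof -
  have "b \<in> pclass b" unfolding pclass_def by (intro CollectI exI[of _ 1]) simp
  then obtain c where "b = c *s a" using assms unfolding pclass_def by blast
  thus ?thesis by (simp add: cr_def vec_eq_iff forall_3 algebra_simps)
qed

lemma arr_of_cr: fixes L :: "(complex^3)^'n"
  assumes "\<forall>i. L$i \<noteq> 0" "\<forall>i j. i \<noteq> j \<longrightarrow> cr (L$i) (L$j) \<noteq> 0"
  shows "is_arrangement L"
  unfolding is_arrangement_def using assms pclass_eq_cr by blast

lemma Sset_conc: "conc L i j k \<longleftrightarrow> k \<in> Sset L i j" by (simp add: Sset_def)

context
  fixes \<phi> :: complex
  assumes ph: "\<phi>*\<phi> = 1 - \<phi>"
begin

lemma ev_eq: "ev \<phi> (a,b) = ev \<phi> (c,d) \<longleftrightarrow> a = c \<and> b = d"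
proof -
  have "ev \<phi> (a,b) = ev \<phi> (c,d) \<longleftrightarrow> ev \<phi> (a,b) - ev \<phi> (c,d) = 0" by simp
  also have "\<dots> \<longleftrightarrow> a - c = 0 \<and> b - d = 0" by (simp only: ev_sub fst_conv snd_conv ev0[OF ph])
  finally show ?thesis by simp
qed

lemmas evs = ev_add ev_sub ev_mult[OF ph] ev0[OF ph] ev_eq

lemma arr_B1: "is_arrangement (B1 \<phi>)"
proof (rule arr_of_cr)
  show "\<forall>i. B1 \<phi> $ i \<noteq> 0" by (simp add: forall_13 vec3_zero_iff B1_ent evs)
  show "\<forall>i j. i \<noteq> j \<longrightarrow> cr (B1 \<phi> $ i) (B1 \<phi> $ j) \<noteq> 0"
    by (simp add: forall_13 vec3_zero_iff cr_def B1_ent evs)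
qed

lemma arr_B2: "is_arrangement (B2 \<phi>)"
proof (rule arr_of_cr)
  show "\<forall>i. B2 \<phi> $ i \<noteq> 0" by (simp add: forall_13 vec3_zero_iff B2_ent evs)
  show "\<forall>i j. i \<noteq> j \<longrightarrow> cr (B2 \<phi> $ i) (B2 \<phi> $ j) \<noteq> 0"
    by (simp add: forall_13 vec3_zero_iff cr_def B2_ent evs)
qed

lemma S12: "\<forall>i j. i \<noteq> j \<longrightarrow> Sset (B1 \<phi>) i j = Sset (B2 \<phi>) i j"
  by (simp add: forall_13 S1_tab[OF ph] S2_tab[OF ph])

lemma comb_B12: "comb (B1 \<phi>) = comb (B2 \<phi>)"
  by (rule comb_eq[OF arr_B1 arr_B2]) (use S12 in \<open>simp add: Sset_conc\<close>)

end


lemma CB: "det3 (vector [dt P a, dt Q a, dt R a]) (vector [dt P b, dt Q b, dt R b]) (vector [dt P c, dt Q c, dt R c]) = det3 a b c * det3 P Q R"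
  by (simp add: det3_def dt_def algebra_simps)

lemma crdet: "det3 (cr b c) (cr c a) (cr a b) = det3 a b c * det3 a b c"
  by (simp add: det3_def cr_def algebra_simps)

lemma det3_smult: "det3 (x *s P) (y *s Q) (z *s R) = x*y*z*det3 P Q R"
  by (simp add: det3_def algebra_simps)

lemma dt_smult: "dt (x *s P) v = x * dt P v"
  by (simp add: dt_def algebra_simps)

lemma det3_cyc: "det3 b c a = det3 a b c"
  by (simp add: det3_def algebra_simps)

lemma det3_rep: "det3 a a c = 0" "det3 a c a = 0" "det3 c a a = 0"
  by (simp_all add: det3_def algebra_simps)

definition gfun :: "(complex^3)^13 \<Rightarrow> complex" where
  "gfun L = det3 (L$4) (L$1) (L$11) * det3 (L$7) (L$2) (L$4) / (det3 (L$2) (L$4) (L$11) * det3 (L$1) (L$7) (L$4))"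

definition hfun :: "(complex^3)^13 \<Rightarrow> complex" where
  "hfun L = gfun L + 1"

lemma bridge:
  fixes L :: "(complex^3)^13"
  assumes D: "det3 (L$1) (L$2) (L$4) \<noteq> 0" and al: "det3 (L$7) (L$2) (L$4) \<noteq> 0"
    and be: "det3 (L$1) (L$7) (L$4) \<noteq> 0" and ga: "det3 (L$1) (L$2) (L$7) \<noteq> 0"
    and n2: "det3 (L$3) (L$2) (L$4) \<noteq> 0" and n4: "det3 (L$5) (L$2) (L$4) \<noteq> 0"
    and n5: "det3 (L$1) (L$6) (L$4) \<noteq> 0" and n7: "det3 (L$8) (L$2) (L$4) \<noteq> 0"
    and n8: "det3 (L$1) (L$9) (L$4) \<noteq> 0" and n9: "det3 (L$10) (L$2) (L$4) \<noteq> 0"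
    and n10: "det3 (L$11) (L$2) (L$4) \<noteq> 0" and n11: "det3 (L$12) (L$2) (L$4) \<noteq> 0"
    and n12: "det3 (L$0) (L$2) (L$4) \<noteq> 0"
    and e012: "det3 (L$1) (L$2) (L$3) = 0" and e019: "det3 (L$1) (L$2) (L$10) = 0"
    and e034: "det3 (L$1) (L$4) (L$5) = 0" and e135: "det3 (L$2) (L$4) (L$6) = 0"
    and e138: "det3 (L$2) (L$4) (L$9) = 0" and e236: "det3 (L$3) (L$4) (L$7) = 0"
    and e167: "det3 (L$2) (L$7) (L$8) = 0" and e068: "det3 (L$1) (L$7) (L$9) = 0"
    and e245: "det3 (L$3) (L$5) (L$6) = 0" and e057: "det3 (L$1) (L$6) (L$8) = 0"
    and e478: "det3 (L$5) (L$8) (L$9) = 0" and e569: "det3 (L$6) (L$7) (L$10) = 0"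
    and e3911: "det3 (L$4) (L$10) (L$12) = 0" and e3712: "det3 (L$4) (L$8) (L$0) = 0"
    and e4610: "det3 (L$5) (L$7) (L$11) = 0" and e11011: "det3 (L$2) (L$11) (L$12) = 0"
    and e01012: "det3 (L$1) (L$11) (L$0) = 0" and e41112: "det3 (L$5) (L$12) (L$0) = 0"
  shows "hfun L * (hfun L * hfun L + 2 * hfun L - 4) = 0"
proof -
  define v0 v1 v3 v6 where "v0 = L$1" and "v1 = L$2" and "v3 = L$4" and "v6 = L$7"
  define \<alpha> \<beta> \<gamma> where "\<alpha> = det3 v6 v1 v3" and "\<beta> = det3 v0 v6 v3" and "\<gamma> = det3 v0 v1 v6"
  have a0: "\<alpha> \<noteq> 0" "\<beta> \<noteq> 0" "\<gamma> \<noteq> 0" using al be ga by (simp_all add: \<alpha>_def \<beta>_def \<gamma>_def v0_def v1_def v3_def v6_def)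
  define P Q R where "P = (1/\<alpha>) *s cr v1 v3" and "Q = (1/\<beta>) *s cr v3 v0" and "R = (1/\<gamma>) *s cr v0 v1"
  define Y where "Y x = (vector [dt P x, dt Q x, dt R x] :: complex^3)" for x
  have Y1: "Y x $ 1 = det3 v1 v3 x / \<alpha>" for x by (simp add: Y_def P_def dt_smult dt_cr)
  have Y2: "Y x $ 2 = det3 v3 v0 x / \<beta>" for x by (simp add: Y_def Q_def dt_smult dt_cr)
  have Y3: "Y x $ 3 = det3 v0 v1 x / \<gamma>" for x by (simp add: Y_def R_def dt_smult dt_cr)
  have K: "det3 P Q R \<noteq> 0"
  proof -
    have "det3 P Q R = (1/\<alpha>)*(1/\<beta>)*(1/\<gamma>) * (det3 v0 v1 v3 * det3 v0 v1 v3)"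
      unfolding P_def Q_def R_def det3_smult crdet ..
    thus ?thesis using a0 D by (simp add: v0_def v1_def v3_def)
  qed
  have YD: "det3 (Y a) (Y b) (Y c) = 0 \<longleftrightarrow> det3 a b c = 0" for a b c
    using K by (simp add: Y_def CB)
  have Dv: "det3 v0 v1 v3 \<noteq> 0" using D by (simp add: v0_def v1_def v3_def)
  have cyc: "det3 v1 v3 v0 = det3 v0 v1 v3" "det3 v3 v0 v1 = det3 v0 v1 v3" by (simp_all add: det3_def algebra_simps)
  have cyc6: "det3 v1 v3 v6 = \<alpha>" "det3 v3 v0 v6 = \<beta>" by (simp_all add: \<alpha>_def \<beta>_def det3_def algebra_simps)
  have "(Y (L$11) $2 / Y (L$11) $1 + 1) * ((Y (L$11) $2 / Y (L$11) $1 + 1) * (Y (L$11) $2 / Y (L$11) $1 + 1) + 2 * (Y (L$11) $2 / Y (L$11) $1 + 1) - 4) = 0"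
  proof (rule core[of "Y v0" "Y v1" "Y v3" "Y v6" "Y (L$3)" "Y (L$5)" "Y (L$6)" "Y (L$8)" "Y (L$9)" "Y (L$10)" "Y (L$11)" "Y (L$12)" "Y (L$0)"])
    show "Y v0 $ 2 = 0" "Y v0 $ 3 = 0" "Y v1 $ 1 = 0" "Y v1 $ 3 = 0" "Y v3 $ 1 = 0" "Y v3 $ 2 = 0"
      by (simp_all add: Y1 Y2 Y3 det3_rep)
    show "Y v0 $ 1 \<noteq> 0" "Y v1 $ 2 \<noteq> 0" "Y v3 $ 3 \<noteq> 0"
      using Dv a0 by (simp_all add: Y1 Y2 Y3 cyc)
    show "Y v6 $ 1 = 1" "Y v6 $ 2 = 1" "Y v6 $ 3 = 1"
      using a0 by (simp_all add: Y1 Y2 Y3 cyc6 \<gamma>_def)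
  qed (simp_all only: YD v0_def v1_def v3_def v6_def, fact+)
  moreover have "Y (L$11) $2 / Y (L$11) $1 = gfun L"
    using a0 by (simp add: Y1 Y2 gfun_def \<alpha>_def \<beta>_def v0_def v1_def v3_def v6_def field_simps)
  ultimately show ?thesis unfolding hfun_def by simp
qed


lemma Sset_self: "i \<in> Sset L i j" "j \<in> Sset L i j"
  by (simp_all add: Sset_def conc_def det3_def algebra_simps)

lemma aut_S:
  fixes B :: "(complex^3)^'n::finite"
  assumes arr: "is_arrangement B" and f: "bij f" and fc: "(image f) ` comb B = comb B" and ij: "i \<noteq> j"
  shows "f ` Sset B i j = Sset B (f i) (f j)"
proof -
  have "Sset B i j \<in> comb B" by (rule S_comb[OF arr ij])
  hence "f ` Sset B i j \<in> comb B" using fc by blast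
  moreover have "f i \<in> f ` Sset B i j" "f j \<in> f ` Sset B i j" using Sset_self by blast+
  moreover have "f i \<noteq> f j" using f ij by (metis bij_def injD)
  ultimately show ?thesis using comb_S[OF arr] by blast
qed

lemma aut_card:
  fixes B :: "(complex^3)^'n::finite"
  assumes arr: "is_arrangement B" and f: "bij f" and fc: "(image f) ` comb B = comb B" and ij: "i \<noteq> j"
  shows "card (Sset B (f i) (f j)) = card (Sset B i j)"
proof -
  have "inj f" using f by (simp add: bij_def)
  hence "card (f ` Sset B i j) = card (Sset B i j)" by (simp add: card_image inj_on_def inj_def)
  thus ?thesis using aut_S[OF assms] by simp
qed

definition nu3 :: "(complex^3)^'n::finite \<Rightarrow> 'n \<Rightarrow> nat" where
  "nu3 L x = card {y. y \<noteq> x \<and> 3 \<le> card (Sset L x y)}"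

lemma aut_nu3:
  fixes B :: "(complex^3)^'n::finite"
  assumes arr: "is_arrangement B" and f: "bij f" and fc: "(image f) ` comb B = comb B"
  shows "nu3 B (f x) = nu3 B x"
proof -
  have inj: "inj f" and surj: "surj f" using f by (simp_all add: bij_def)
  have "{y. y \<noteq> f x \<and> 3 \<le> card (Sset B (f x) y)} = f ` {y. y \<noteq> x \<and> 3 \<le> card (Sset B x y)}"
  proof (rule set_eqI)
    fix y
    obtain y' where y': "y = f y'" using surj by (metis surjD)
    have "y \<noteq> f x \<longleftrightarrow> y' \<noteq> x" using inj y' by (metis injD)
    moreover have "y' \<noteq> x \<Longrightarrow> card (Sset B (f x) y) = card (Sset B x y')"
      using aut_card[OF arr f fc, of x y'] y' by simp
    moreover have "y \<in> f ` A \<longleftrightarrow> y' \<in> A" for A using inj y' by (simp add: inj_image_mem_iff)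
    ultimately show "y \<in> {y. y \<noteq> f x \<and> 3 \<le> card (Sset B (f x) y)} \<longleftrightarrow> y \<in> f ` {y. y \<noteq> x \<and> 3 \<le> card (Sset B x y)}"
      by auto
  qed
  thus ?thesis unfolding nu3_def using inj by (simp add: card_image inj_on_def inj_def)
qed

lemma aut_fix:
  fixes B :: "(complex^3)^'n::finite"
  assumes arr: "is_arrangement B" and f: "bij f" and fc: "(image f) ` comb B = comb B"
    and ab: "a \<noteq> b" "f a = a" "f b = b" and c: "c \<in> Sset B a b"
    and others: "\<forall>e\<in>Sset B a b - {c}. f e = e"
  shows "f c = c"
proof (rule ccontr)
  assume nc: "f c \<noteq> c"
  have "f c \<in> f ` Sset B a b" using c by simp
  hence "f c \<in> Sset B a b" using aut_S[OF arr f fc ab(1)] ab by simp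
  hence "f (f c) = f c" using others nc by blast
  hence "f c = c" using f by (metis bij_def injD)
  thus False using nc by simp
qed

lemma two_sets: "X = A \<or> X = B \<Longrightarrow> Y = A \<or> Y = B \<Longrightarrow> X \<noteq> Y \<Longrightarrow> z \<in> X \<Longrightarrow> z \<in> Y \<Longrightarrow> z \<in> A \<and> z \<in> B"
  by auto

context
  fixes \<phi> :: complex
  assumes ph: "\<phi>*\<phi> = 1 - \<phi>"
begin

lemma L4: "\<forall>x y. x \<noteq> y \<longrightarrow> card (Sset (B1 \<phi>) x y) = 4 \<longrightarrow> Sset (B1 \<phi>) x y = {1,2,3,10} \<or> Sset (B1 \<phi>) x y = {2,4,6,9}"
  by (simp add: forall_13 S1_tab[OF ph])

lemma nu3_tab: "nu3 (B1 \<phi>) 0 = 6" "nu3 (B1 \<phi>) 1 = 11" "nu3 (B1 \<phi>) 2 = 10" "nu3 (B1 \<phi>) 3 = 7" "nu3 (B1 \<phi>) 4 = 11" "nu3 (B1 \<phi>) 5 = 10" "nu3 (B1 \<phi>) 6 = 9" "nu3 (B1 \<phi>) 7 = 10" "nu3 (B1 \<phi>) 8 = 8" "nu3 (B1 \<phi>) 9 = 7" "nu3 (B1 \<phi>) 10 = 7" "nu3 (B1 \<phi>) 11 = 6" "nu3 (B1 \<phi>) 12 = 6"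
  unfolding nu3_def Collect_13 by (simp_all add: S1_tab[OF ph])

lemma nu3_vals: "\<forall>x. (nu3 (B1 \<phi>) x = 9 \<longrightarrow> x = 6) \<and> (nu3 (B1 \<phi>) x = 8 \<longrightarrow> x = 8)"
  "nu3 (B1 \<phi>) 6 = 9" "nu3 (B1 \<phi>) 8 = 8"
  by (simp_all add: forall_13 nu3_tab)

lemma aut_id:
  assumes f: "bij f" and fc: "(image f) ` comb (B1 \<phi>) = comb (B1 \<phi>)"
  shows "f = id"
proof -
  note arr = arr_B1[OF ph]
  note S = S1_tab[OF ph]
  have inj: "inj f" using f by (simp add: bij_def)
  let ?A = "{1,2,3,10} :: 13 set" and ?B = "{2,4,6,9} :: 13 set"
  have fA: "f ` ?A = Sset (B1 \<phi>) (f 2) (f 1)"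
  proof -
    have "f ` Sset (B1 \<phi>) 2 1 = Sset (B1 \<phi>) (f 2) (f 1)" by (rule aut_S[OF arr f fc]) simp
    thus ?thesis by (simp only: S)
  qed
  have fB: "f ` ?B = Sset (B1 \<phi>) (f 2) (f 4)"
  proof -
    have "f ` Sset (B1 \<phi>) 2 4 = Sset (B1 \<phi>) (f 2) (f 4)" by (rule aut_S[OF arr f fc]) simp
    thus ?thesis by (simp only: S)
  qed
  have cA: "card (Sset (B1 \<phi>) (f 2) (f 1)) = 4"
  proof -
    have "card (Sset (B1 \<phi>) (f 2) (f 1)) = card (Sset (B1 \<phi>) 2 1)" by (rule aut_card[OF arr f fc]) simp
    thus ?thesis by (simp add: S)
  qed
  have cB: "card (Sset (B1 \<phi>) (f 2) (f 4)) = 4"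
  proof -
    have "card (Sset (B1 \<phi>) (f 2) (f 4)) = card (Sset (B1 \<phi>) 2 4)" by (rule aut_card[OF arr f fc]) simp
    thus ?thesis by (simp add: S)
  qed
  have n21: "f 2 \<noteq> f 1" "f 2 \<noteq> f 4" using inj by (simp_all add: inj_eq)
  have hA: "f ` ?A = ?A \<or> f ` ?A = ?B" unfolding fA by (rule L4[rule_format, OF n21(1) cA])
  have hB: "f ` ?B = ?A \<or> f ` ?B = ?B" unfolding fB by (rule L4[rule_format, OF n21(2) cB])
  have ne: "f ` ?A \<noteq> f ` ?B"
  proof
    assume "f ` ?A = f ` ?B"
    hence "?A = ?B" by (simp only: inj_image_eq_iff[OF inj])
    moreover have "(1::13) \<in> ?A" "(1::13) \<notin> ?B" by simp_all
    ultimately show False by simp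
  qed
  have m1: "f 2 \<in> f ` ?A" by (rule imageI) simp
  have m2: "f 2 \<in> f ` ?B" by (rule imageI) simp
  have "f 2 \<in> ?A \<and> f 2 \<in> ?B" by (rule two_sets[OF hA hB ne m1 m2])
  hence f2: "f 2 = 2" by auto
  have "nu3 (B1 \<phi>) (f 6) = 9" using aut_nu3[OF arr f fc, of 6] nu3_vals(2) by simp
  hence f6: "f 6 = 6" using nu3_vals(1) by blast
  have "nu3 (B1 \<phi>) (f 8) = 8" using aut_nu3[OF arr f fc, of 8] nu3_vals(3) by simp
  hence f8: "f 8 = 8" using nu3_vals(1) by blast
  note fx = aut_fix[OF arr f fc]
  have f7: "f 7 = 7" by (rule fx[of 2 8]) (simp_all add: insert_Diff_if S f2 f8)
  have f1: "f 1 = 1" by (rule fx[of 6 8]) (simp_all add: insert_Diff_if S f6 f8)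
  have f10: "f 10 = 10" by (rule fx[of 6 7]) (simp_all add: insert_Diff_if S f6 f7)
  have f3: "f 3 = 3" by (rule fx[of 1 2]) (simp_all add: insert_Diff_if S f1 f2 f10)
  have f9: "f 9 = 9" by (rule fx[of 1 7]) (simp_all add: insert_Diff_if S f1 f7)
  have f4: "f 4 = 4" by (rule fx[of 2 6]) (simp_all add: insert_Diff_if S f2 f6 f9)
  have f5: "f 5 = 5" by (rule fx[of 3 6]) (simp_all add: insert_Diff_if S f3 f6)
  have f11: "f 11 = 11" by (rule fx[of 5 7]) (simp_all add: insert_Diff_if S f5 f7)
  have f12: "f 12 = 12" by (rule fx[of 4 10]) (simp_all add: insert_Diff_if S f4 f10)
  have f0: "f 0 = 0" by (rule fx[of 4 8]) (simp_all add: insert_Diff_if S f4 f8)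
  show "f = id"
  proof
    fix x :: 13
    show "f x = id x" using exhaust_13[of x] f0 f1 f2 f3 f4 f5 f6 f7 f8 f9 f10 f11 f12 by auto
  qed
qed

end


lemma cont_det: "continuous_on S (\<lambda>L::(complex^3)^'n. det3 (L$i) (L$j) (L$k))"
  unfolding det3_def by (intro continuous_intros)

lemma Zfin: "finite {z::complex. z*(z*z+2*z-4) = 0}"
proof -
  let ?s = "complex_of_real (sqrt 5)"
  have s: "?s * ?s = 5" by (simp flip: of_real_mult)
  have "{z::complex. z*(z*z+2*z-4) = 0} \<subseteq> {0, -1 + ?s, -1 - ?s}"
  proof
    fix z :: complex assume "z \<in> {z. z*(z*z+2*z-4) = 0}"
    hence h: "z*(z*z+2*z-4) = 0" by simp
    have "z*z+2*z-4 = (z+1-?s)*(z+1+?s)" using s by (simp add: algebra_simps)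
    hence "z = 0 \<or> (z+1-?s)*(z+1+?s) = 0" using h by simp
    hence c: "z = 0 \<or> z+1-?s = 0 \<or> z+1+?s = 0" by simp
    have e1: "z = (z+1-?s) + (-1+?s)" and e2: "z = (z+1+?s) + (-1-?s)" by (simp_all add: algebra_simps)
    from c have "z = 0 \<or> z = -1 + ?s \<or> z = -1 - ?s"
    proof (elim disjE)
      assume "z+1-?s = 0" thus ?thesis using e1 by simp
    next
      assume "z+1+?s = 0" thus ?thesis using e2 by simp
    qed simp
    thus "z \<in> {0, -1 + ?s, -1 - ?s}" by simp
  qed
  thus ?thesis by (rule finite_subset) simp
qed

context
  fixes \<phi> :: complex
  assumes ph: "\<phi>*\<phi> = 1 - \<phi>"
begin

lemma R_det:
  assumes L: "L \<in> realization_space (comb (B1 \<phi>))" and ij: "i \<noteq> j"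
  shows "det3 (L$i) (L$j) (L$k) = 0 \<longleftrightarrow> k \<in> Sset (B1 \<phi>) i j"
proof -
  have aL: "is_arrangement L" and cL: "comb L = comb (B1 \<phi>)" using L by (simp_all add: realization_space_def)
  have "conc L i j k \<longleftrightarrow> conc (B1 \<phi>) i j k" by (rule conc_transfer[OF aL arr_B1[OF ph] cL ij])
  thus ?thesis by (simp add: conc_def Sset_def)
qed

lemma hfun_R:
  assumes L: "L \<in> realization_space (comb (B1 \<phi>))"
  shows "hfun L * (hfun L * hfun L + 2 * hfun L - 4) = 0"
  by (rule bridge) (simp_all add: R_det[OF L] S1_tab[OF ph])

lemma hfun_cont: "continuous_on (realization_space (comb (B1 \<phi>))) hfun"
  unfolding hfun_def gfun_def
  by (intro continuous_intros cont_det) (auto simp: R_det S1_tab[OF ph])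

lemma hB2: "hfun (B2 \<phi>) = 0"
proof -
  have d: "det3 (B2 \<phi> $ 2) (B2 \<phi> $ 4) (B2 \<phi> $ 11) * det3 (B2 \<phi> $ 1) (B2 \<phi> $ 7) (B2 \<phi> $ 4) \<noteq> 0"
    by (simp add: det3_def B2_ent evs[OF ph])
  have n: "det3 (B2 \<phi> $ 4) (B2 \<phi> $ 1) (B2 \<phi> $ 11) * det3 (B2 \<phi> $ 7) (B2 \<phi> $ 2) (B2 \<phi> $ 4) + det3 (B2 \<phi> $ 2) (B2 \<phi> $ 4) (B2 \<phi> $ 11) * det3 (B2 \<phi> $ 1) (B2 \<phi> $ 7) (B2 \<phi> $ 4) = 0"
    by (simp add: det3_def B2_ent evs[OF ph])
  show ?thesis unfolding hfun_def gfun_def using d n by (simp add: field_simps)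
qed

lemma hB1: "hfun (B1 \<phi>) \<noteq> 0"
proof -
  have d: "det3 (B1 \<phi> $ 2) (B1 \<phi> $ 4) (B1 \<phi> $ 11) * det3 (B1 \<phi> $ 1) (B1 \<phi> $ 7) (B1 \<phi> $ 4) \<noteq> 0"
    by (simp add: det3_def B1_ent evs[OF ph])
  have n: "det3 (B1 \<phi> $ 4) (B1 \<phi> $ 1) (B1 \<phi> $ 11) * det3 (B1 \<phi> $ 7) (B1 \<phi> $ 2) (B1 \<phi> $ 4) + det3 (B1 \<phi> $ 2) (B1 \<phi> $ 4) (B1 \<phi> $ 11) * det3 (B1 \<phi> $ 1) (B1 \<phi> $ 7) (B1 \<phi> $ 4) \<noteq> 0"
    by (simp add: det3_def B1_ent evs[OF ph])
  show ?thesis unfolding hfun_def gfun_def using d n by (simp add: field_simps)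
qed

lemma not_comp: "B2 \<phi> \<notin> connected_component_set (realization_space (comb (B1 \<phi>))) (B1 \<phi>)"
proof
  let ?R = "realization_space (comb (B1 \<phi>))"
  assume "B2 \<phi> \<in> connected_component_set ?R (B1 \<phi>)"
  then obtain T where T: "connected T" "T \<subseteq> ?R" "B1 \<phi> \<in> T" "B2 \<phi> \<in> T"
    unfolding connected_component_def mem_Collect_eq by blast
  have "connected (hfun ` T)"
    by (rule connected_continuous_image[OF continuous_on_subset[OF hfun_cont T(2)] T(1)])
  moreover have "hfun ` T \<subseteq> {z. z*(z*z+2*z-4) = 0}" using T(2) hfun_R by blast
  hence "finite (hfun ` T)" using Zfin finite_subset by blast
  ultimately have o: "hfun ` T = {} \<or> (\<exists>a. hfun ` T = {a})" using connected_finite_iff_sing by blast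
  have m1: "hfun (B1 \<phi>) \<in> hfun ` T" by (rule imageI[OF T(3)])
  have m2: "hfun (B2 \<phi>) \<in> hfun ` T" by (rule imageI[OF T(4)])
  have "hfun ` T \<noteq> {}" using m1 by blast
  then obtain a where a: "hfun ` T = {a}" using o by blast
  have "hfun (B1 \<phi>) = a" using m1 unfolding a by simp
  moreover have "hfun (B2 \<phi>) = a" using m2 unfolding a by simp
  ultimately have "hfun (B1 \<phi>) = hfun (B2 \<phi>)" by simp
  thus False using hB1 hB2 by simp
qed

lemma pair: "is_pair (B1 \<phi>) (B2 \<phi>)"
  unfolding is_pair_def
proof (intro conjI allI impI)
  show "is_arrangement (B1 \<phi>)" "is_arrangement (B2 \<phi>)" using arr_B1[OF ph] arr_B2[OF ph] .
  show "\<exists>f. lattice_iso (B1 \<phi>) (B2 \<phi>) f"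
    by (rule exI[of _ id]) (simp add: lattice_iso_def comb_B12[OF ph])
  fix f assume "lattice_iso (B1 \<phi>) (B2 \<phi>) f"
  hence "bij f" "(image f) ` comb (B1 \<phi>) = comb (B1 \<phi>)" by (simp_all add: lattice_iso_def comb_B12[OF ph])
  hence "f = id" by (rule aut_id[OF ph])
  moreover have "relabel (B2 \<phi>) id = B2 \<phi>" by (simp add: relabel_def)
  ultimately show "relabel (B2 \<phi>) f \<notin> connected_component_set (realization_space (comb (B1 \<phi>))) (B1 \<phi>)"
    using not_comp by simp
qed

end


lemma sf0: "is_subfield F \<Longrightarrow> 0 \<in> F" by (simp add: is_subfield_def)
lemma sf1: "is_subfield F \<Longrightarrow> 1 \<in> F" by (simp add: is_subfield_def)
lemma sf_add: "is_subfield F \<Longrightarrow> x \<in> F \<Longrightarrow> y \<in> F \<Longrightarrow> x + y \<in> F" by (simp add: is_subfield_def)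
lemma sf_mult: "is_subfield F \<Longrightarrow> x \<in> F \<Longrightarrow> y \<in> F \<Longrightarrow> x * y \<in> F" by (simp add: is_subfield_def)
lemma sf_neg: "is_subfield F \<Longrightarrow> x \<in> F \<Longrightarrow> - x \<in> F" by (simp add: is_subfield_def)
lemma sf_inv: "is_subfield F \<Longrightarrow> x \<in> F \<Longrightarrow> inverse x \<in> F"
  by (cases "x = 0") (simp_all add: is_subfield_def)

lemma sf_diff: "is_subfield F \<Longrightarrow> x \<in> F \<Longrightarrow> y \<in> F \<Longrightarrow> x - y \<in> F"
  using sf_add[of F x "-y"] sf_neg[of F y] by simp

lemma sf_div: "is_subfield F \<Longrightarrow> x \<in> F \<Longrightarrow> y \<in> F \<Longrightarrow> x / y \<in> F"
  using sf_mult[of F x "inverse y"] sf_inv[of F y] by (simp add: divide_inverse)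

lemma sf_nat: "is_subfield F \<Longrightarrow> of_nat n \<in> F"
  by (induct n) (simp_all add: sf0 sf1 sf_add)

lemma sf_int: assumes "is_subfield F" shows "of_int z \<in> F"
proof (cases "z \<ge> 0")
  case True
  hence "of_int z = (of_nat (nat z) :: complex)" by simp
  thus ?thesis using sf_nat[OF assms] by simp
next
  case False
  hence "of_int z = - (of_nat (nat (-z)) :: complex)" by simp
  thus ?thesis using sf_nat[OF assms] sf_neg[OF assms] by simp
qed

lemma sf_rat: assumes "is_subfield F" shows "of_rat q \<in> F"
proof -
  obtain n d where "quotient_of q = (n,d)" by (cases "quotient_of q")
  hence "q = of_int n / of_int d" by (rule quotient_of_div)
  hence "of_rat q = (of_int n / of_int d :: complex)" by (simp add: of_rat_divide)
  thus ?thesis using sf_div[OF assms sf_int[OF assms] sf_int[OF assms]] by simp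
qed

lemma rat_real: "(of_rat q :: complex) \<in> \<real>"
proof -
  obtain n d where "quotient_of q = (n,d)" by (cases "quotient_of q")
  hence "q = of_int n / of_int d" by (rule quotient_of_div)
  hence "of_rat q = (of_int n / of_int d :: complex)" by (simp add: of_rat_divide)
  thus ?thesis by simp
qed

lemma ev_in: "is_subfield F \<Longrightarrow> \<phi> \<in> F \<Longrightarrow> ev \<phi> p \<in> F"
  unfolding ev_def by (intro sf_add sf_mult sf_int) auto

abbreviation s5 :: complex where "s5 \<equiv> complex_of_real (sqrt 5)"

lemma s5sq: "s5 * s5 = 5" by (simp flip: of_real_mult)

lemma Q_mem: "x \<in> Q_sqrt5 \<longleftrightarrow> (\<exists>a b. x = of_rat a + of_rat b * s5)"
  unfolding Q_sqrt5_def by simp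

lemma norm_nz: fixes a b :: rat assumes "a \<noteq> 0 \<or> b \<noteq> 0" shows "a*a - 5*(b*b) \<noteq> 0"
proof
  assume h: "a*a - 5*(b*b) = 0"
  show False
  proof (cases "b = 0")
    case True thus False using h assms by simp
  next
    case False
    have "(a/b)*(a/b) = 5" using h False by (simp add: field_simps)
    hence "(of_rat (a/b) :: real)^2 = 5" by (simp add: power2_eq_square flip: of_rat_mult)
    hence e: "sqrt 5 = \<bar>of_rat (a/b) :: real\<bar>" by (metis real_sqrt_abs)
    have "\<bar>of_rat (a/b) :: real\<bar> \<in> \<rat>" by (simp add: abs_if)
    hence "sqrt (5::real) \<in> \<rat>" using e by simp
    thus False using sqrt5_irr by simp
  qed
qed

lemma Q_subfield: "is_subfield Q_sqrt5"
  unfolding is_subfield_def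
proof (intro conjI ballI impI)
  show "0 \<in> Q_sqrt5" unfolding Q_mem by (rule exI[of _ 0], rule exI[of _ 0]) simp
  show "1 \<in> Q_sqrt5" unfolding Q_mem by (rule exI[of _ 1], rule exI[of _ 0]) simp
  fix x assume "x \<in> Q_sqrt5"
  then obtain a b where x: "x = of_rat a + of_rat b * s5" unfolding Q_mem by blast
  show "- x \<in> Q_sqrt5" unfolding Q_mem x by (rule exI[of _ "-a"], rule exI[of _ "-b"]) (simp add: of_rat_minus)
  {
    fix y assume "y \<in> Q_sqrt5"
    then obtain c d where y: "y = of_rat c + of_rat d * s5" unfolding Q_mem by blast
    show "x + y \<in> Q_sqrt5" unfolding Q_mem x y
      by (rule exI[of _ "a+c"], rule exI[of _ "b+d"]) (simp add: of_rat_add algebra_simps)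
    have "x * y = of_rat (a*c + 5*(b*d)) + of_rat (a*d + b*c) * s5"
    proof -
      have "x * y = of_rat a * of_rat c + of_rat b * of_rat d * (s5 * s5) + (of_rat a * of_rat d + of_rat b * of_rat c) * s5"
        unfolding x y by (simp add: algebra_simps)
      also have "\<dots> = of_rat (a*c + 5*(b*d)) + of_rat (a*d + b*c) * s5"
        unfolding s5sq by (simp add: of_rat_add of_rat_mult algebra_simps)
      finally show ?thesis .
    qed
    thus "x * y \<in> Q_sqrt5" unfolding Q_mem by blast
  }
  assume "x \<noteq> 0"
  hence ab: "a \<noteq> 0 \<or> b \<noteq> 0" using x by auto
  define n where "n = a*a - 5*(b*b)"
  have n0: "n \<noteq> 0" unfolding n_def by (rule norm_nz[OF ab])
  have n0': "(of_rat n :: complex) \<noteq> 0" using n0 by simp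
  have "x * (of_rat (a/n) + of_rat (-b/n) * s5) = 1"
  proof -
    have "x * (of_rat (a/n) + of_rat (-b/n) * s5) = (of_rat a * of_rat a - of_rat b * of_rat b * (s5 * s5)) / of_rat n"
      unfolding x using n0' by (simp add: of_rat_divide of_rat_minus field_simps)
    also have "\<dots> = of_rat n / of_rat n" unfolding s5sq n_def by (simp add: of_rat_diff of_rat_mult algebra_simps)
    also have "\<dots> = 1" using n0' by simp
    finally show ?thesis .
  qed
  hence "inverse x = of_rat (a/n) + of_rat (-b/n) * s5" by (rule inverse_unique)
  thus "inverse x \<in> Q_sqrt5" unfolding Q_mem by blast
qed

lemma Q_real: "Q_sqrt5 \<subseteq> \<real>"
proof
  fix x assume "x \<in> Q_sqrt5"
  then obtain a b where x: "x = of_rat a + of_rat b * s5" unfolding Q_mem by blast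
  show "x \<in> \<real>" unfolding x using rat_real[of a] rat_real[of b] by (intro Reals_add Reals_mult) auto
qed

lemma def_field_eq:
  fixes L :: "(complex^3)^'n"
  assumes ent: "\<And>i k. L$i$k \<in> Q_sqrt5" and r1: "L$r$1 = 1" and r2: "L$r$2 = \<phi>"
    and s: "s5 = 2*\<phi>+1 \<or> s5 = -(2*\<phi>+1)"
  shows "def_field L = Q_sqrt5"
proof
  have "Q_sqrt5 \<in> {F. is_subfield F \<and> (\<forall>i j k. L$i$j \<noteq> 0 \<longrightarrow> L$i$k / L$i$j \<in> F)}"
    using Q_subfield sf_div[OF Q_subfield ent ent] by blast
  thus "def_field L \<subseteq> Q_sqrt5" unfolding def_field_def by blast
  show "Q_sqrt5 \<subseteq> def_field L" unfolding def_field_def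
  proof (rule Inter_greatest)
    fix F assume "F \<in> {F. is_subfield F \<and> (\<forall>i j k. L$i$j \<noteq> 0 \<longrightarrow> L$i$k / L$i$j \<in> F)}"
    hence F: "is_subfield F" and rat: "\<And>i j k. L$i$j \<noteq> 0 \<Longrightarrow> L$i$k / L$i$j \<in> F" by auto
    have "L$r$2 / L$r$1 \<in> F" using rat[of r 1 2] r1 by simp
    hence ph: "\<phi> \<in> F" using r1 r2 by simp
    have "2*\<phi>+1 \<in> F" using ph by (intro sf_add sf_mult sf1 F) (auto intro: sf_int[OF F, of 2, simplified])
    hence sF: "s5 \<in> F" using s sf_neg[OF F, of "2*\<phi>+1"] by (elim disjE) simp_all
    show "Q_sqrt5 \<subseteq> F"
    proof
      fix x assume "x \<in> Q_sqrt5"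
      then obtain a b where x: "x = of_rat a + of_rat b * s5" unfolding Q_mem by blast
      show "x \<in> F" unfolding x using sF by (intro sf_add sf_mult sf_rat F)
    qed
  qed
qed


locale autF =
  fixes F :: "complex set" and \<sigma> :: "complex \<Rightarrow> complex"
  assumes F: "is_subfield F" and fa: "field_aut F \<sigma>"
begin

lemma hom: "x \<in> F \<Longrightarrow> y \<in> F \<Longrightarrow> \<sigma> (x + y) = \<sigma> x + \<sigma> y" "x \<in> F \<Longrightarrow> y \<in> F \<Longrightarrow> \<sigma> (x * y) = \<sigma> x * \<sigma> y"
  using fa unfolding field_aut_def by blast+

lemma inF: "x \<in> F \<Longrightarrow> \<sigma> x \<in> F"
  using fa unfolding field_aut_def bij_betw_def by blast

lemma injF: "x \<in> F \<Longrightarrow> y \<in> F \<Longrightarrow> \<sigma> x = \<sigma> y \<Longrightarrow> x = y"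
  using fa unfolding field_aut_def bij_betw_def inj_on_def by blast

lemma s0: "\<sigma> 0 = 0"
proof -
  have "\<sigma> (0 + 0) = \<sigma> 0 + \<sigma> 0" using hom(1)[OF sf0[OF F] sf0[OF F]] .
  thus ?thesis by simp
qed

lemma s1: "\<sigma> 1 = 1"
proof -
  have "\<sigma> (1 * 1) = \<sigma> 1 * \<sigma> 1" using hom(2)[OF sf1[OF F] sf1[OF F]] .
  hence "\<sigma> 1 * (\<sigma> 1 - 1) = 0" by (simp add: algebra_simps)
  moreover have "\<sigma> 1 \<noteq> 0" using injF[OF sf1[OF F] sf0[OF F]] s0 by auto
  ultimately show ?thesis by simp
qed

lemma sneg: "x \<in> F \<Longrightarrow> \<sigma> (- x) = - \<sigma> x"
proof -
  assume x: "x \<in> F"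
  have "\<sigma> (x + - x) = \<sigma> x + \<sigma> (- x)" using hom(1)[OF x sf_neg[OF F x]] .
  hence "\<sigma> x + \<sigma> (- x) = 0" using s0 by simp
  thus ?thesis by (simp add: add_eq_0_iff)
qed

lemma sdiff: "x \<in> F \<Longrightarrow> y \<in> F \<Longrightarrow> \<sigma> (x - y) = \<sigma> x - \<sigma> y"
  using hom(1)[of x "-y"] sneg[of y] sf_neg[OF F, of y] by simp

lemma snat: "\<sigma> (of_nat n) = of_nat n"
proof (induct n)
  case 0 thus ?case using s0 by simp
next
  case (Suc n)
  have "\<sigma> (of_nat (Suc n)) = \<sigma> (1 + of_nat n)" by simp
  also have "\<dots> = 1 + of_nat n" using hom(1)[OF sf1[OF F] sf_nat[OF F]] s1 Suc by simp
  finally show ?case by simp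
qed

lemma sint: "\<sigma> (of_int z) = of_int z"
proof (cases "z \<ge> 0")
  case True
  hence "of_int z = (of_nat (nat z) :: complex)" by simp
  thus ?thesis using snat by simp
next
  case False
  hence e: "of_int z = - (of_nat (nat (-z)) :: complex)" by simp
  have h: "\<sigma> (- (of_nat (nat (-z)) :: complex)) = - of_nat (nat (-z))"
    using sneg[OF sf_nat[OF F]] snat by simp
  show ?thesis unfolding e by (rule h)
qed

lemma sev: "\<phi> \<in> F \<Longrightarrow> \<sigma> (ev \<phi> p) = ev (\<sigma> \<phi>) p"
  unfolding ev_def
  using hom(1)[OF sf_int[OF F] sf_mult[OF F sf_int[OF F]]] hom(2)[OF sf_int[OF F]] sint by simp

lemma transfer_line:
  assumes X: "\<And>k. X$k \<in> F" and Y: "\<And>k. Y$k \<in> F" and c: "cr X Y = 0" and X0: "X \<noteq> 0" and Y0: "Y \<noteq> 0"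
  shows "pclass (\<chi> k. \<sigma> (X$k)) = pclass (\<chi> k. \<sigma> (Y$k))"
proof -
  define X' Y' where "X' = (\<chi> k. \<sigma> (X$k))" and "Y' = (\<chi> k. \<sigma> (Y$k))"
  have c1: "X$2*Y$3 - X$3*Y$2 = 0" "X$3*Y$1 - X$1*Y$3 = 0" "X$1*Y$2 - X$2*Y$1 = 0"
    using c by (simp_all add: cr_def vec3_zero_iff)
  have sd: "\<sigma> (X$a*Y$b - X$b*Y$a) = \<sigma> (X$a) * \<sigma> (Y$b) - \<sigma> (X$b) * \<sigma> (Y$a)" for a b
    using sdiff[OF sf_mult[OF F X Y] sf_mult[OF F X Y]] hom(2)[OF X Y] hom(2)[OF X Y] by simp
  have c': "cr X' Y' = 0"
    using sd[of 2 3] sd[of 3 1] sd[of 1 2] c1 s0 by (simp add: cr_def vec3_zero_iff X'_def Y'_def)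
  obtain k where Xk: "X$k \<noteq> 0" using X0 by (auto simp: vec_eq_iff)
  have X'k: "X'$k \<noteq> 0" using Xk injF[OF X sf0[OF F], of k] s0 by (auto simp: X'_def)
  obtain j where Yj: "Y$j \<noteq> 0" using Y0 by (auto simp: vec_eq_iff)
  have Y'0: "Y' \<noteq> 0" using Yj injF[OF Y sf0[OF F], of j] s0 by (auto simp: Y'_def vec_eq_iff)
  have e: "Y' = (Y'$k / X'$k) *s X'" by (rule cr_zero_par[OF c' X'k])
  have "Y'$k / X'$k \<noteq> 0" using Y'0 e by auto
  hence "pclass Y' = pclass X'" using e pclass_smult by metis
  thus ?thesis by (simp add: X'_def Y'_def)
qed

end

context
  fixes \<phi> :: complex
  assumes ph: "\<phi>*\<phi> = 1 - \<phi>"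
begin

lemma noline1: "\<forall>i. cr (B2 \<phi> $ 11) (B1 \<phi> $ i) \<noteq> 0"
  by (simp add: forall_13 vec3_zero_iff cr_def B2_ent B1_ent evs[OF ph])

lemma noline2: "\<forall>i. cr (B2 \<phi> $ 11) (B1 (-1-\<phi>) $ i) \<noteq> 0"
  by (simp add: forall_13 vec3_zero_iff cr_def B2_ent B1m_ent evs[OF ph])

lemma not_arith:
  assumes phd: "\<phi> \<in> def_field (B1 \<phi>)"
  shows "\<not> arithmetic_pair (B1 \<phi>) (B2 \<phi>)"
proof
  assume "arithmetic_pair (B1 \<phi>) (B2 \<phi>)"
  then obtain F \<sigma> M where nf: "number_field F" and d1: "def_field (B1 \<phi>) \<subseteq> F" and fa: "field_aut F \<sigma>"
    and Mi: "\<forall>i. pclass (M$i) = pclass (B1 \<phi> $ i) \<and> (\<forall>k. M$i$k \<in> F)"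
    and lo: "lines_of (act \<sigma> M) = lines_of (B2 \<phi>)"
    unfolding arithmetic_pair_def by blast
  have F: "is_subfield F" using nf by (simp add: number_field_def)
  interpret autF F \<sigma> using F fa by unfold_locales
  have phF: "\<phi> \<in> F" using phd d1 by blast
  define \<psi> where "\<psi> = \<sigma> \<phi>"
  have "\<sigma> (\<phi>*\<phi>) = \<sigma> (1 - \<phi>)" using ph by simp
  hence "\<psi>*\<psi> = 1 - \<psi>" using hom(2)[OF phF phF] sdiff[OF sf1[OF F] phF] s1 by (simp add: \<psi>_def)
  hence "(\<psi> - \<phi>) * (\<psi> + \<phi> + 1) = 0" using ph by algebra
  hence c: "\<psi> - \<phi> = 0 \<or> \<psi> + \<phi> + 1 = 0" by (simp only: mult_eq_0_iff)
  have e1: "\<psi> = (\<psi> - \<phi>) + \<phi>" and e2: "\<psi> = (\<psi> + \<phi> + 1) + (-1-\<phi>)" by (simp_all add: algebra_simps)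
  have psi: "\<psi> = \<phi> \<or> \<psi> = -1-\<phi>"
  proof (rule disjE[OF c])
    assume "\<psi> - \<phi> = 0" thus ?thesis using e1 by simp
  next
    assume "\<psi> + \<phi> + 1 = 0" hence "\<psi> = -1-\<phi>" using e2 by simp
    thus ?thesis by simp
  qed
  have entF: "\<forall>i k. B1 \<phi> $ i $ k \<in> F"
    by (simp add: forall_13 forall_3 B1_ent ev_in[OF F phF])
  have entS: "\<forall>i k. \<sigma> (B1 \<phi> $ i $ k) = B1 \<psi> $ i $ k"
    by (simp add: forall_13 forall_3 B1_ent sev[OF phF] \<psi>_def)
  have lines: "pclass (act \<sigma> M $ i) = pclass (B1 \<psi> $ i)" for i
  proof -
    have B0: "B1 \<phi> $ i \<noteq> 0" using arr_B1[OF ph] by (simp add: is_arrangement_def)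
    have pc: "pclass (M$i) = pclass (B1 \<phi> $ i)" using Mi by blast
    have "B1 \<phi> $ i \<in> pclass (B1 \<phi> $ i)" unfolding pclass_def by (intro CollectI exI[of _ 1]) simp
    then obtain c where "B1 \<phi> $ i = c *s M$i" using pc unfolding pclass_def by blast
    hence M0: "M$i \<noteq> 0" using B0 by auto
    have "pclass (\<chi> k. \<sigma> (M$i$k)) = pclass (\<chi> k. \<sigma> (B1 \<phi> $ i $ k))"
      by (rule transfer_line) (use Mi entF pclass_eq_cr[OF pc] M0 B0 in auto)
    moreover have "(\<chi> k. \<sigma> (B1 \<phi> $ i $ k)) = B1 \<psi> $ i" using entS by (simp add: vec_eq_iff)
    ultimately show ?thesis by (simp add: act_def)
  qed
  have "lines_of (act \<sigma> M) = lines_of (B1 \<psi>)" unfolding lines_of_def using lines by simp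
  hence "pclass (B2 \<phi> $ 11) \<in> lines_of (B1 \<psi>)" using lo unfolding lines_of_def by auto
  then obtain i where "pclass (B2 \<phi> $ 11) = pclass (B1 \<psi> $ i)" unfolding lines_of_def by blast
  hence "cr (B2 \<phi> $ 11) (B1 \<psi> $ i) = 0" by (rule pclass_eq_cr)
  thus False using psi noline1 noline2 by auto
qed

end


theorem theorem3p3:
  fixes \<phi> :: complex
  assumes "\<phi> = (-1 + complex_of_real (sqrt 5)) / 2 \<or> \<phi> = (-1 - complex_of_real (sqrt 5)) / 2"
  shows "is_pair (B1 \<phi>) (B2 \<phi>) \<and> \<not> arithmetic_pair (B1 \<phi>) (B2 \<phi>)
     \<and> def_field (B1 \<phi>) = Q_sqrt5 \<and> def_field (B2 \<phi>) = Q_sqrt5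
     \<and> def_field (B1 \<phi>) \<subseteq> \<real> \<and> def_field (B2 \<phi>) \<subseteq> \<real>"
proof -
  have ph: "\<phi>*\<phi> = 1 - \<phi>" by (rule phi_sq[OF assms])
  have s: "s5 = 2*\<phi>+1 \<or> s5 = -(2*\<phi>+1)"
    using assms
  proof
    assume "\<phi> = (-1 + s5) / 2" thus ?thesis by (simp add: algebra_simps)
  next
    assume "\<phi> = (-1 - s5) / 2" thus ?thesis by (simp add: algebra_simps)
  qed
  have phQ: "\<phi> \<in> Q_sqrt5" unfolding Q_mem
    using assms
  proof
    assume "\<phi> = (-1 + s5) / 2"
    thus "\<exists>a b. \<phi> = of_rat a + of_rat b * s5"
      by (intro exI[of _ "-1/2"] exI[of _ "1/2"]) (simp add: of_rat_divide of_rat_minus field_simps)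
  next
    assume "\<phi> = (-1 - s5) / 2"
    thus "\<exists>a b. \<phi> = of_rat a + of_rat b * s5"
      by (intro exI[of _ "-1/2"] exI[of _ "-1/2"]) (simp add: of_rat_divide of_rat_minus field_simps)
  qed
  have e1: "\<forall>i k. B1 \<phi> $ i $ k \<in> Q_sqrt5" by (simp add: forall_13 forall_3 B1_ent ev_in[OF Q_subfield phQ])
  have e2: "\<forall>i k. B2 \<phi> $ i $ k \<in> Q_sqrt5" by (simp add: forall_13 forall_3 B2_ent ev_in[OF Q_subfield phQ])
  have d1: "def_field (B1 \<phi>) = Q_sqrt5"
    by (rule def_field_eq[of _ 7 \<phi>]) (use e1 s in \<open>simp_all add: B1_ent ev_def\<close>)
  have d2: "def_field (B2 \<phi>) = Q_sqrt5"
    by (rule def_field_eq[of _ 7 \<phi>]) (use e2 s in \<open>simp_all add: B2_ent ev_def\<close>)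
  have "is_pair (B1 \<phi>) (B2 \<phi>)" by (rule pair[OF ph])
  moreover have "\<not> arithmetic_pair (B1 \<phi>) (B2 \<phi>)" by (rule not_arith[OF ph]) (simp add: d1 phQ)
  ultimately show ?thesis using d1 d2 Q_real by simp
qed


end
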